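(* Let $f:\mathbb{R}^n_{>0}\to\mathbb{R}^n_{>0}$ be order-preserving and homogeneous. The eigenspace $E(f)$ is nonempty and bounded in $(\mathbb{R}^n_{>0},d_H)$ if and only if for every nonempty proper subset $J\subset[n]$, $$r(f^J_0)<\lambda\big(f^{[n]\setminus J}_\infty\big).$$
   Context: $[n]=\{1,\dots,n\}$. For $x,y\in\mathbb{R}^n$, $x\le y$ means $y_i\ge x_i$ for all $i$. A map $f$ is order-preserving if $x\le y$ implies $f(x)\le f(y)$, and homogeneous if $f(tx)=tf(x)$ for all $t>0$. Hilbert's projective metric on $\mathbb{R}^n_{>0}$ is $d_H(x,y)=\log\max_{i,j\in[n]}\frac{y_ix_j}{x_iy_j}$. $E(f)=\{x\in\mathbb{R}^n_{>0}: f(x)=\mu x\text{ for some }\mu\}$ is the set of entrywise positive eigenvectors of $f$. Every order-preserving homogeneous $f:\mathbb{R}^n_{>0}\to\mathbb{R}^n_{>0}$ extends continuously (and uniquely) to order-preserving homogeneous maps $\mathbb{R}^n_{\ge0}\to\mathbb{R}^n_{\ge0}$ and $(0,\infty]^n\to(0,\infty]^n$ (order topology on the extended reals, conventions $c<\infty$, $c\cdot\infty=\infty$ for $c>0$); these extensions are also denoted $f$. For $\alpha\in[-\infty,\infty]$ and $J\subseteq[n]$, $P^J_\alpha$ is the map with $P^J_\alpha(x)_j=x_j$ if $j\in J$ and $P^J_\alpha(x)_j=\alpha$ otherwise. Define $f^J_0=P^J_0\circ f\circ P^J_0:\mathbb{R}^n_{\ge0}\to\mathbb{R}^n_{\ge0}$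 and $f^J_\infty=P^J_\infty\circ f\circ P^J_\infty:(0,\infty]^n\to(0,\infty]^n$. For an order-preserving homogeneous map $g$ on $\mathbb{R}^n_{\ge0}$ or on $(0,\infty]^n$, the upper and lower Collatz–Wielandt numbers are $r(g)=\inf_{x\in\mathbb{R}^n_{>0}}\max_{i\in[n]}g(x)_i/x_i$ and $\lambda(g)=\sup_{x\in\mathbb{R}^n_{>0}}\min_{i\in[n]}g(x)_i/x_i$, with values in $[0,\infty]$ (a ratio with infinite numerator is $\infty$). *)

theory Defs
  imports "HOL-Analysis.Analysis"
begin

text \<open>Vectors in R^n are modelled as real^'n for a finite index type 'n ([n] = UNIV).
  Points of (0,\<infinity>]^n are modelled as functions 'n \<Rightarrow> ereal (product topology of
  the order topology on the extended reals).\<close>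

definition pos_vec :: "real^'n \<Rightarrow> bool" where
  "pos_vec x \<longleftrightarrow> (\<forall>i. 0 < x $ i)"

definition nonneg_vec :: "real^'n \<Rightarrow> bool" where
  "nonneg_vec x \<longleftrightarrow> (\<forall>i. 0 \<le> x $ i)"

definition order_preserving_pos :: "(real^'n \<Rightarrow> real^'n) \<Rightarrow> bool" where
  "order_preserving_pos f \<longleftrightarrow>
     (\<forall>x y. pos_vec x \<and> pos_vec y \<and> (\<forall>i. x $ i \<le> y $ i) \<longrightarrow> (\<forall>i. f x $ i \<le> f y $ i))"

definition homogeneous_pos :: "(real^'n \<Rightarrow> real^'n) \<Rightarrow> bool" where
  "homogeneous_pos f \<longleftrightarrow> (\<forall>x t. pos_vec x \<and> 0 < t \<longrightarrow> f (t *\<^sub>R x) = t *\<^sub>R f x)"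

definition hilbert_metric :: "real^'n \<Rightarrow> real^'n \<Rightarrow> real" where
  "hilbert_metric x y = ln (Max {(y $ i * x $ j) / (x $ i * y $ j) | i j. True})"

definition eigvecs :: "(real^'n \<Rightarrow> real^'n) \<Rightarrow> (real^'n) set" where
  "eigvecs f = {x. pos_vec x \<and> (\<exists>\<mu>::real. f x = \<mu> *\<^sub>R x)}"

definition hilbert_bounded :: "(real^'n) set \<Rightarrow> bool" where
  "hilbert_bounded S \<longleftrightarrow> (\<exists>x0 C. pos_vec x0 \<and> (\<forall>x\<in>S. hilbert_metric x0 x \<le> C))"

text \<open>The continuous extension of f to the closed cone R^n_{\<ge>0}: its value at x is the
  limit of f(y) as y \<rightarrow> x with y in R^n_{>0} (dense in R^n_{\<ge>0}).\<close>
definition ext0 :: "(real^'n \<Rightarrow> real^'n) \<Rightarrow> real^'n \<Rightarrow> real^'n" where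
  "ext0 f x = Lim (at x within {y. pos_vec y}) f"

definition ereal_vec :: "real^'n \<Rightarrow> ('n \<Rightarrow> ereal)" where
  "ereal_vec y = (\<lambda>i. ereal (y $ i))"

text \<open>The continuous extension of f to (0,\<infinity>]^n: its value at x is the limit of f(y)
  as y \<rightarrow> x with y in R^n_{>0} (dense in (0,\<infinity>]^n); limits in the product
  topology are taken componentwise.\<close>
definition extinf :: "(real^'n \<Rightarrow> real^'n) \<Rightarrow> ('n \<Rightarrow> ereal) \<Rightarrow> ('n \<Rightarrow> ereal)" where
  "extinf f x = (\<lambda>i. Lim (at x within (ereal_vec ` {y. pos_vec y}))
                    (\<lambda>z. ereal (f (\<chi> j. real_of_ereal (z j)) $ i)))"

definition P0 :: "'n set \<Rightarrow> real^'n \<Rightarrow> real^'n" where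
  "P0 J x = (\<chi> j. if j \<in> J then x $ j else 0)"

definition Pinf :: "'n set \<Rightarrow> ('n \<Rightarrow> ereal) \<Rightarrow> ('n \<Rightarrow> ereal)" where
  "Pinf J x = (\<lambda>j. if j \<in> J then x j else \<infinity>)"

definition f0J :: "(real^'n \<Rightarrow> real^'n) \<Rightarrow> 'n set \<Rightarrow> real^'n \<Rightarrow> real^'n" where
  "f0J f J = P0 J \<circ> ext0 f \<circ> P0 J"

definition finfJ :: "(real^'n \<Rightarrow> real^'n) \<Rightarrow> 'n set \<Rightarrow> ('n \<Rightarrow> ereal) \<Rightarrow> ('n \<Rightarrow> ereal)" where
  "finfJ f J = Pinf J \<circ> extinf f \<circ> Pinf J"

definition cw_upper :: "(real^'n \<Rightarrow> real^'n) \<Rightarrow> ereal" where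
  "cw_upper g = (INF x\<in>{x. pos_vec x}. ereal (Max (range (\<lambda>i. g x $ i / x $ i))))"

text \<open>Lower Collatz--Wielandt number of a map on (0,\<infinity>]^n, valued in [0,\<infinity>]
  (ereal division: \<infinity> / c = \<infinity> for c > 0).\<close>
definition cw_lower :: "(('n::finite \<Rightarrow> ereal) \<Rightarrow> ('n \<Rightarrow> ereal)) \<Rightarrow> ereal" where
  "cw_lower g = (SUP x\<in>{x. pos_vec x}. Min (range (\<lambda>i. g (ereal_vec x) i / ereal (x $ i))))"

end

theory Submission
  imports Defs "HOL-Analysis.Analysis"
begin

lemma tendsto_fun_iff:
  fixes l :: "'a \<Rightarrow> 'b::topological_space"
  shows "(g \<longlongrightarrow> l) F \<longleftrightarrow> (\<forall>i. ((\<lambda>x. g x i) \<longlongrightarrow> l i) F)"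
  using limitin_componentwise[of "\<lambda>_. euclidean" UNIV g l F]
  by (simp add: euclidean_product_topology)

lemma open_fun_coord_less:
  fixes c :: "'b::linorder_topology"
  shows "open {z::'a\<Rightarrow>'b. c < z i}" "open {z::'a\<Rightarrow>'b. z i < c}"
  by (auto intro!: open_Collect_less continuous_intros)

lemma open_fun_all:
  assumes "\<And>i. open (A i)"
  shows "open {z. \<forall>i::'a::finite. z \<in> A i}"
proof -
  have "{z. \<forall>i. z \<in> A i} = (\<Inter>i\<in>UNIV. A i)" by auto
  then show ?thesis using assms by (auto intro!: open_INT)
qed

locale ophom =
  fixes f :: "real^'n \<Rightarrow> real^'n"
  assumes fpos: "\<And>x. pos_vec x \<Longrightarrow> pos_vec (f x)"
    and fop: "order_preserving_pos f"
    and fhom: "homogeneous_pos f"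
begin

lemma fpos': "pos_vec x \<Longrightarrow> 0 < f x $ i"
  using fpos pos_vec_def by blast

lemma fmono: "pos_vec x \<Longrightarrow> pos_vec y \<Longrightarrow> (\<And>i. x $ i \<le> y $ i) \<Longrightarrow> f x $ i \<le> f y $ i"
  using fop unfolding order_preserving_pos_def by blast

lemma fhom': "pos_vec x \<Longrightarrow> 0 < t \<Longrightarrow> f (t *\<^sub>R x) $ i = t * f x $ i"
  using fhom unfolding homogeneous_pos_def by simp

lemma pos_scale: "pos_vec x \<Longrightarrow> 0 < t \<Longrightarrow> pos_vec (t *\<^sub>R x)"
  by (simp add: pos_vec_def)

lemma flow: "pos_vec x \<Longrightarrow> pos_vec y \<Longrightarrow> 0 < a \<Longrightarrow> (\<And>j. a * x $ j \<le> y $ j) \<Longrightarrow> a * f x $ i \<le> f y $ i"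
  using fmono[of "a *\<^sub>R x" y i] fhom'[of x a i] pos_scale[of x a] by simp

lemma fup: "pos_vec x \<Longrightarrow> pos_vec y \<Longrightarrow> 0 < b \<Longrightarrow> (\<And>j. y $ j \<le> b * x $ j) \<Longrightarrow> f y $ i \<le> b * f x $ i"
  using fmono[of y "b *\<^sub>R x" i] fhom'[of x b i] pos_scale[of x b] by simp


lemma open_vec_gt: "open {y::real^'n. \<forall>j. c j < y $ j}"
  using open_fun_all[of "\<lambda>j. {y::real^'n. c j < y $ j}"] open_halfspace_component_gt_cart by auto

lemma open_vec_lt: "open {y::real^'n. \<forall>j. y $ j < c j}"
  using open_fun_all[of "\<lambda>j. {y::real^'n. y $ j < c j}"] open_halfspace_component_lt_cart by auto

lemma pos_min: "pos_vec (y::real^'n) \<Longrightarrow> 0 < Min (range (\<lambda>j. y $ j))"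
  by (simp add: pos_vec_def)

lemma fcont: "continuous_on {x. pos_vec x} f"
  unfolding continuous_on_def
proof (intro ballI vec_tendstoI order_tendstoI)
  fix x i and a :: real assume x: "x \<in> {x. pos_vec x}" and a: "a < f x $ i"
  have fx: "0 < f x $ i" using x fpos' by auto
  obtain s where s: "0 < s" "s < 1" "a < s * f x $ i"
  proof (cases "a < 0")
    case True then show ?thesis using that[of "1/2"] fx by auto
  next
    case False
    then show ?thesis using that[of "(a / f x $ i + 1)/2"] fx a by (auto simp: field_simps)
  qed
  show "\<forall>\<^sub>F y in at x within {x. pos_vec x}. a < f y $ i"
    unfolding eventually_at_topological
  proof (intro exI conjI ballI impI)
    show "open {y::real^'n. \<forall>j. s * x $ j < y $ j}" by (rule open_vec_gt)
    show "x \<in> {y. \<forall>j. s * x $ j < y $ j}" using x s by (auto simp: pos_vec_def)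
    fix y assume y: "y \<in> {y. \<forall>j. s * x $ j < y $ j}" "y \<in> {x. pos_vec x}"
    have "\<And>j. s * x $ j \<le> y $ j" using y by (auto intro: less_imp_le)
    then have "s * f x $ i \<le> f y $ i" using flow[of x y s i] x y s by auto
    then show "a < f y $ i" using s by auto
  qed
next
  fix x i and b :: real assume x: "x \<in> {x. pos_vec x}" and b: "f x $ i < b"
  have fx: "0 < f x $ i" using x fpos' by auto
  obtain s where s: "1 < s" "s * f x $ i < b"
    using that[of "(b / f x $ i + 1)/2"] fx b by (auto simp: field_simps)
  show "\<forall>\<^sub>F y in at x within {x. pos_vec x}. f y $ i < b"
    unfolding eventually_at_topological
  proof (intro exI conjI ballI impI)
    show "open {y::real^'n. \<forall>j. y $ j < s * x $ j}" by (rule open_vec_lt)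
    show "x \<in> {y. \<forall>j. y $ j < s * x $ j}" using x s by (auto simp: pos_vec_def)
    fix y assume y: "y \<in> {y. \<forall>j. y $ j < s * x $ j}" "y \<in> {x. pos_vec x}"
    have "\<And>j. y $ j \<le> s * x $ j" using y by (auto intro: less_imp_le)
    then have "f y $ i \<le> s * f x $ i" using fup[of x y s i] x y s by auto
    then show "f y $ i < b" using s by auto
  qed
qed

end

context ophom begin

definition lowext :: "real^'n \<Rightarrow> real^'n" where
  "lowext x = (\<chi> i. Inf ((\<lambda>e. f (x + e *\<^sub>R 1) $ i) ` {0<..}))"

lemma pos_shift: "nonneg_vec x \<Longrightarrow> 0 < e \<Longrightarrow> pos_vec (x + e *\<^sub>R 1)"
  by (auto simp: pos_vec_def nonneg_vec_def add_nonneg_pos)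

lemma lowext_bdd: "nonneg_vec x \<Longrightarrow> bdd_below ((\<lambda>e. f (x + e *\<^sub>R 1) $ i) ` {0<..})"
  by (rule bdd_belowI[of _ 0]) (auto intro: less_imp_le fpos'[OF pos_shift])

lemma lowext_lower: "nonneg_vec x \<Longrightarrow> 0 < e \<Longrightarrow> lowext x $ i \<le> f (x + e *\<^sub>R 1) $ i"
  unfolding lowext_def using lowext_bdd[of x i] by (auto intro!: cInf_lower)

lemma lowext_greatest: "(\<And>e. 0 < e \<Longrightarrow> c \<le> f (x + e *\<^sub>R 1) $ i) \<Longrightarrow> c \<le> lowext x $ i"
  unfolding lowext_def by (auto intro!: cInf_greatest)

lemma lowext_nonneg: "nonneg_vec x \<Longrightarrow> 0 \<le> lowext x $ i"
  by (rule lowext_greatest) (auto intro: less_imp_le fpos'[OF pos_shift])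

lemma lowext_le_pos:
  assumes a: "nonneg_vec a" and b: "pos_vec b" and ab: "\<And>j. a $ j \<le> b $ j"
  shows "lowext a $ i \<le> f b $ i"
proof (rule field_le_epsilon)
  fix d :: real assume d: "0 < d"
  define m where "m = Min (range (\<lambda>j. b $ j))"
  have m: "0 < m" using pos_min[OF b] m_def by auto
  have mb: "m \<le> b $ j" for j unfolding m_def by auto
  have fb: "0 < f b $ i" using b fpos' by auto
  define t where "t = d / f b $ i"
  have t: "0 < t" using d fb t_def by auto
  have "lowext a $ i \<le> f (a + (t*m) *\<^sub>R 1) $ i" using lowext_lower[OF a] t m by auto
  also have "\<dots> \<le> (1 + t) * f b $ i"
  proof (rule fup)
    show "pos_vec (a + (t * m) *\<^sub>R 1)" using pos_shift[OF a] t m by auto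
    fix j show "(a + (t * m) *\<^sub>R 1) $ j \<le> (1 + t) * b $ j"
    proof -
      have "m * t \<le> t * b $ j" using mult_left_mono[OF mb[of j], of t] t by (simp add: mult.commute)
      then show ?thesis using ab[of j] by (simp add: algebra_simps)
    qed
  qed (use b t in auto)
  also have "\<dots> = f b $ i + d" using fb by (simp add: t_def algebra_simps)
  finally show "lowext a $ i \<le> f b $ i + d" .
qed

lemma lowext_scale:
  assumes a: "nonneg_vec a" and b: "nonneg_vec b" and t: "0 < t" and ab: "\<And>j. t * a $ j \<le> b $ j"
  shows "t * lowext a $ i \<le> lowext b $ i"
proof (rule lowext_greatest)
  fix e :: real assume e: "0 < e"
  have "t * lowext a $ i \<le> t * f (a + (e/t) *\<^sub>R 1) $ i"
    using lowext_lower[OF a, of "e/t"] e t by auto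
  also have "\<dots> \<le> f (b + e *\<^sub>R 1) $ i"
  proof (rule flow)
    show "pos_vec (a + (e / t) *\<^sub>R 1)" using pos_shift[OF a] e t by auto
    show "pos_vec (b + e *\<^sub>R 1)" using pos_shift[OF b] e by auto
    fix j show "t * (a + (e / t) *\<^sub>R 1) $ j \<le> (b + e *\<^sub>R 1) $ j"
      using ab[of j] t by (auto simp: algebra_simps)
  qed (use t in auto)
  finally show "t * lowext a $ i \<le> f (b + e *\<^sub>R 1) $ i" .
qed


lemma islimpt_pos: "nonneg_vec (x::real^'n) \<Longrightarrow> x islimpt {y. pos_vec y}"
  unfolding islimpt_sequential
proof (intro exI conjI allI)
  assume x: "nonneg_vec x"
  show "(\<lambda>k. x + (1 / (real k + 1)) *\<^sub>R 1) n \<in> {y. pos_vec y} - {x}" for n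
  proof -
    have "pos_vec (x + (1 / (real n + 1)) *\<^sub>R 1)" using pos_shift[OF x] by auto
    moreover have "x + (1 / (real n + 1)) *\<^sub>R 1 \<noteq> x"
    proof
      assume "x + (1 / (real n + 1)) *\<^sub>R 1 = x"
      then have "(x + (1 / (real n + 1)) *\<^sub>R 1) $ undefined = x $ undefined" by simp
      then show False by simp
    qed
    ultimately show ?thesis by auto
  qed
  have "(\<lambda>k. 1 / (real k + 1)) \<longlonglongrightarrow> 0" using LIMSEQ_inverse_real_of_nat_add[of 0]
    by (simp add: divide_inverse add.commute)
  then have "(\<lambda>k. x + (1 / (real k + 1)) *\<^sub>R (1::real^'n)) \<longlonglongrightarrow> x + 0 *\<^sub>R 1"
    by (intro tendsto_intros)
  then show "(\<lambda>k. x + (1 / (real k + 1)) *\<^sub>R (1::real^'n)) \<longlonglongrightarrow> x" by simp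
qed

lemma ext0_eq:
  assumes x: "nonneg_vec x"
  shows "ext0 f x = lowext x"
  unfolding ext0_def
proof (rule tendsto_Lim)
  show "\<not> trivial_limit (at x within {y. pos_vec y})"
    using islimpt_pos[OF x] trivial_limit_within by blast
  show "(f \<longlongrightarrow> lowext x) (at x within {y. pos_vec y})"
  proof (intro vec_tendstoI order_tendstoI)
    fix i and a :: real assume a: "a < lowext x $ i"
    have L: "0 \<le> lowext x $ i" using lowext_nonneg[OF x] .
    obtain s where s: "0 < s" "s < 1" "a < s * lowext x $ i"
    proof (cases "a < 0")
      case True then show ?thesis using that[of "1/2"] L by auto
    next
      case False
      then show ?thesis using that[of "(a / lowext x $ i + 1)/2"] L a by (auto simp: field_simps)
    qed
    show "\<forall>\<^sub>F y in at x within {y. pos_vec y}. a < f y $ i"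
      unfolding eventually_at_topological
    proof (intro exI conjI ballI impI)
      let ?A = "\<lambda>j. {y::real^'n. 0 < x $ j \<longrightarrow> s * x $ j < y $ j}"
      have "open (?A j)" for j
        by (cases "0 < x $ j") (auto simp: open_halfspace_component_gt_cart)
      then show "open {y. \<forall>j. y \<in> ?A j}" by (rule open_fun_all)
      show "x \<in> {y. \<forall>j. y \<in> ?A j}" using s by auto
      fix y assume y: "y \<in> {y. \<forall>j. y \<in> ?A j}" "y \<in> {y. pos_vec y}"
      define ej where "ej = (\<lambda>j. if 0 < x $ j then (y $ j - s * x $ j) / s else y $ j / s)"
      define e where "e = Min (range ej)"
      have ejpos: "0 < ej j" for j using y s unfolding ej_def pos_vec_def by auto
      have e: "0 < e" unfolding e_def using ejpos by auto
      have ee: "e \<le> ej j" for j unfolding e_def by auto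
      have le: "s * (x + e *\<^sub>R 1) $ j \<le> y $ j" for j
      proof -
        have "s * e \<le> s * ej j" using ee[of j] s by auto
        moreover have "s * ej j = (if 0 < x $ j then y $ j - s * x $ j else y $ j)"
          using s by (auto simp: ej_def)
        moreover have "0 \<le> x $ j" using x nonneg_vec_def by auto
        ultimately show ?thesis using s
          by (cases "0 < x $ j") (auto simp: algebra_simps)
      qed
      have "s * lowext x $ i \<le> s * f (x + e *\<^sub>R 1) $ i"
        using lowext_lower[OF x e] s by auto
      also have "\<dots> \<le> f y $ i"
        using flow[of "x + e *\<^sub>R 1" y s i] pos_shift[OF x e] y le s by auto
      finally show "a < f y $ i" using s by auto
    qed
  next
    fix i and b :: real assume b: "lowext x $ i < b"
    obtain e where e: "0 < e" "f (x + e *\<^sub>R 1) $ i < b"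
      using b unfolding lowext_def using cInf_less_iff[OF _ lowext_bdd[OF x]] by auto
    show "\<forall>\<^sub>F y in at x within {y. pos_vec y}. f y $ i < b"
      unfolding eventually_at_topological
    proof (intro exI conjI ballI impI)
      show "open {y::real^'n. \<forall>j. y $ j < (x + e *\<^sub>R 1) $ j}" by (rule open_vec_lt)
      show "x \<in> {y. \<forall>j. y $ j < (x + e *\<^sub>R 1) $ j}" using e by auto
      fix y assume y: "y \<in> {y. \<forall>j. y $ j < (x + e *\<^sub>R 1) $ j}" "y \<in> {y. pos_vec y}"
      have "f y $ i \<le> f (x + e *\<^sub>R 1) $ i"
        using fmono[of y "x + e *\<^sub>R 1" i] pos_shift[OF x e(1)] y by (auto intro: less_imp_le)
      then show "f y $ i < b" using e by auto
    qed
  qed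
qed


definition upext :: "('n \<Rightarrow> ereal) \<Rightarrow> 'n \<Rightarrow> ereal" where
  "upext y i = (SUP v\<in>{v. pos_vec v \<and> (\<forall>j. ereal (v $ j) \<le> y j)}. ereal (f v $ i))"

lemma upext_upper: "pos_vec v \<Longrightarrow> (\<And>j. ereal (v $ j) \<le> y j) \<Longrightarrow> ereal (f v $ i) \<le> upext y i"
  unfolding upext_def by (rule SUP_upper) auto

lemma upext_le: "(\<And>v. pos_vec v \<Longrightarrow> (\<And>j. ereal (v $ j) \<le> y j) \<Longrightarrow> ereal (f v $ i) \<le> c) \<Longrightarrow> upext y i \<le> c"
  unfolding upext_def by (rule SUP_least) auto

lemma real_vec_ereal: "(\<chi> j. real_of_ereal (ereal_vec w j)) = w"
  by (simp add: ereal_vec_def vec_eq_iff)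

lemma extinf_eq:
  assumes ypos: "\<And>j. 0 < y j" and yinf: "\<exists>j. y j = \<infinity>"
  shows "extinf f y = upext y"
proof
  fix i
  define S where "S = ereal_vec ` {y. pos_vec (y::real^'n)}"
  define g where "g = (\<lambda>z::'n\<Rightarrow>ereal. ereal (f (\<chi> j. real_of_ereal (z j)) $ i))"
  define v0 where "v0 = (\<chi> j. if y j = \<infinity> then 1 else real_of_ereal (y j))"
  have yfin: "y j \<noteq> \<infinity> \<Longrightarrow> ereal (real_of_ereal (y j)) = y j \<and> 0 < real_of_ereal (y j)" for j
    using ypos[of j] by (cases "y j") auto
  have v0a: "pos_vec v0" using yfin unfolding v0_def pos_vec_def by auto
  have v0b: "ereal (v0 $ j) \<le> y j" for j
  proof (cases "y j = \<infinity>")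
    case False then show ?thesis using yfin[OF False] unfolding v0_def by simp
  qed (simp)
  note v0 = v0a v0b
  have U0: "0 < upext y i"
  proof -
    have "0 < ereal (f v0 $ i)" using fpos'[OF v0a] by simp
    then show ?thesis using upext_upper[OF v0a v0b, of i] by (rule less_le_trans)
  qed
  have "extinf f y i = Lim (at y within S) g" unfolding extinf_def S_def g_def by simp
  also have "\<dots> = upext y i"
  proof (rule tendsto_Lim)
    show "\<not> trivial_limit (at y within S)"
    proof -
      define Z where "Z = (\<lambda>k::nat. ereal_vec (\<chi> j. if y j = \<infinity> then real k + 1 else real_of_ereal (y j)))"
      have Z1: "Z k \<in> S - {y}" for k
      proof -
        have "pos_vec (\<chi> j. if y j = \<infinity> then real k + 1 else real_of_ereal (y j))"
          using yfin by (auto simp: pos_vec_def)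
        moreover obtain j where yj: "y j = \<infinity>" using yinf by auto
        have "Z k \<noteq> y"
        proof
          assume "Z k = y"
          then have "Z k j = \<infinity>" using yj by simp
          then show False by (simp add: Z_def ereal_vec_def)
        qed
        ultimately show ?thesis unfolding S_def Z_def by auto
      qed
      have Z2: "Z \<longlonglongrightarrow> y"
        unfolding tendsto_fun_iff
      proof
        fix j
        show "(\<lambda>k. Z k j) \<longlonglongrightarrow> y j"
        proof (cases "y j = \<infinity>")
          case True
          have "(\<lambda>k. ereal (real k + 1)) \<longlonglongrightarrow> \<infinity>"
            unfolding tendsto_PInfty
          proof
            fix r :: real
            obtain N :: nat where "r < real N" using reals_Archimedean2 by auto
            then show "\<forall>\<^sub>F k in sequentially. ereal r < ereal (real k + 1)"
              unfolding eventually_sequentially by (intro exI[of _ N]) auto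
          qed
          then show ?thesis using True by (simp add: Z_def ereal_vec_def)
        next
          case False
          then show ?thesis using yfin[of j] by (simp add: Z_def ereal_vec_def)
        qed
      qed
      show ?thesis unfolding trivial_limit_within islimpt_sequential using Z1 Z2 by blast
    qed
    show "(g \<longlongrightarrow> upext y i) (at y within S)"
    proof (rule order_tendstoI)
      fix a assume a: "a < upext y i"
      then obtain v where v: "pos_vec v" "\<And>j. ereal (v $ j) \<le> y j" "a < ereal (f v $ i)"
        unfolding upext_def less_SUP_iff by auto
      have fv: "0 < f v $ i" using fpos' v(1) by auto
      obtain s where s: "0 < s" "s < 1" "a < ereal (s * f v $ i)"
      proof (cases a)
        case (real r)
        show ?thesis
        proof (cases "r < 0")
          case True then show ?thesis using that[of "1/2"] fv real by auto
        next
          case False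
          then show ?thesis using that[of "(r / f v $ i + 1)/2"] fv real v(3) by (auto simp: field_simps)
        qed
      next
        case PInf then show ?thesis using a by auto
      next
        case MInf then show ?thesis using that[of "1/2"] by auto
      qed
      show "\<forall>\<^sub>F z in at y within S. a < g z"
        unfolding eventually_at_topological
      proof (intro exI conjI ballI impI)
        show "open {z::'n\<Rightarrow>ereal. \<forall>j. z \<in> {z. ereal (s * v $ j) < z j}}"
          by (rule open_fun_all) (rule open_fun_coord_less)
        show "y \<in> {z::'n\<Rightarrow>ereal. \<forall>j. z \<in> {z. ereal (s * v $ j) < z j}}"
        proof (simp, intro allI)
          fix j have "0 < v $ j" using v(1) pos_vec_def by auto
          then have "s * v $ j < v $ j" using s by simp
          then have "ereal (s * v $ j) < ereal (v $ j)" by simp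
          then show "ereal (s * v $ j) < y j" using v(2)[of j] by (rule less_le_trans)
        qed
        fix z assume z: "z \<in> {z::'n\<Rightarrow>ereal. \<forall>j. z \<in> {z. ereal (s * v $ j) < z j}}" "z \<in> S"
        then obtain w where w: "pos_vec w" "z = ereal_vec w" unfolding S_def by auto
        have "s * v $ j \<le> w $ j" for j using z(1) w by (auto simp: ereal_vec_def intro: less_imp_le)
        then have "s * f v $ i \<le> f w $ i" using flow[of v w s i] v(1) w(1) s by auto
        then have "ereal (s * f v $ i) \<le> ereal (f w $ i)" by simp
        then show "a < g z" unfolding g_def w(2) real_vec_ereal using s(3)
          by (simp add: less_le_trans)
      qed
    next
      fix b assume b: "upext y i < b"
      show "\<forall>\<^sub>F z in at y within S. g z < b"
      proof (cases b)
        case PInf then show ?thesis by (simp add: g_def)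
      next
        case MInf then show ?thesis using b by auto
      next
        case (real rb)
        obtain U where U: "upext y i = ereal U" using b U0 real by (cases "upext y i") auto
        have Upos: "0 < U" using U0 U by auto
        have Ub: "U < rb" using b U real by auto
        define s where "s = (rb / U + 1) / 2"
        have s: "1 < s" "s * U < rb" using Upos Ub by (auto simp: s_def field_simps)
        let ?A = "\<lambda>j. {z::'n\<Rightarrow>ereal. y j = \<infinity> \<or> z j < ereal (s * real_of_ereal (y j))}"
        show ?thesis
          unfolding eventually_at_topological
        proof (intro exI conjI ballI impI)
          have "open (?A j)" for j
            by (cases "y j = \<infinity>") (auto simp: open_fun_coord_less)
          then show "open {z. \<forall>j. z \<in> ?A j}" by (rule open_fun_all)
          have "y j = \<infinity> \<or> y j < ereal (s * real_of_ereal (y j))" for j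
          proof (cases "y j = \<infinity>")
            case False
            then have r: "ereal (real_of_ereal (y j)) = y j" "0 < real_of_ereal (y j)" using yfin by auto
            then have "real_of_ereal (y j) < s * real_of_ereal (y j)" using s by simp
            then have "ereal (real_of_ereal (y j)) < ereal (s * real_of_ereal (y j))" by simp
            then show ?thesis using r(1) by simp
          qed simp
          then show "y \<in> {z. \<forall>j. z \<in> ?A j}" by simp
          fix z assume z: "z \<in> {z. \<forall>j. z \<in> ?A j}" "z \<in> S"
          then obtain w where w: "pos_vec w" "z = ereal_vec w" unfolding S_def by auto
          define v where "v = (1/s) *\<^sub>R w"
          have vpos: "pos_vec v" unfolding v_def using pos_scale[OF w(1)] s by auto
          have "ereal (v $ j) \<le> y j" for j
          proof (cases "y j = \<infinity>")
            case True then show ?thesis by simp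
          next
            case False
            then have "w $ j < s * real_of_ereal (y j)" using z(1) w(2) by (auto simp: ereal_vec_def)
            then have "v $ j \<le> real_of_ereal (y j)" using s unfolding v_def by (auto simp: field_simps)
            then have "ereal (v $ j) \<le> ereal (real_of_ereal (y j))" by simp
            then show ?thesis using yfin[OF False] by simp
          qed
          then have "ereal (f v $ i) \<le> ereal U" using upext_upper[OF vpos] U by metis
          then have fv: "f v $ i \<le> U" by simp
          have "w = s *\<^sub>R v" unfolding v_def using s by auto
          then have "f w $ i = s * f v $ i" using fhom'[OF vpos, of s] s by auto
          also have "\<dots> \<le> s * U" using fv s by auto
          finally show "g z < b" unfolding g_def w(2) real_vec_ereal real using s by auto
        qed
      qed
    qed
  qed
  finally show "extinf f y i = upext y i" .
qed

end

context ophom begin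

lemma P0_nonneg: "pos_vec y \<Longrightarrow> nonneg_vec (P0 J y)"
  by (auto simp: P0_def nonneg_vec_def pos_vec_def less_imp_le)

lemma g_term: "pos_vec y \<Longrightarrow> f0J f J y $ i = (if i \<in> J then lowext (P0 J y) $ i else 0)"
proof -
  assume y: "pos_vec y"
  have "ext0 f (P0 J y) = lowext (P0 J y)" by (rule ext0_eq[OF P0_nonneg[OF y]])
  then show ?thesis by (simp add: f0J_def) (simp add: P0_def)
qed

lemma finf_term:
  assumes y: "pos_vec y" and J: "J \<noteq> {}"
  shows "finfJ f (- J) (ereal_vec y) i = (if i \<in> J then \<infinity> else upext (Pinf (- J) (ereal_vec y)) i)"
proof -
  have "extinf f (Pinf (- J) (ereal_vec y)) = upext (Pinf (- J) (ereal_vec y))"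
  proof (rule extinf_eq)
    show "0 < Pinf (- J) (ereal_vec y) j" for j using y by (auto simp: Pinf_def ereal_vec_def pos_vec_def)
    show "\<exists>j. Pinf (- J) (ereal_vec y) j = \<infinity>" using J by (auto simp: Pinf_def)
  qed
  then show ?thesis by (simp add: finfJ_def Pinf_def)
qed

lemma inf_div: "0 < p \<Longrightarrow> \<infinity> / ereal p = \<infinity>"
  by (simp add: divide_ereal_def)


lemma lim_nonneg:
  assumes X: "\<And>k. pos_vec (X k)" and lim: "X \<longlonglongrightarrow> x"
  shows "nonneg_vec x"
  unfolding nonneg_vec_def
proof
  fix i
  have "(\<lambda>k. X k $ i) \<longlonglongrightarrow> x $ i" using lim by (rule tendsto_vec_nth)
  moreover have "\<forall>k. 0 \<le> X k $ i" using X by (auto simp: pos_vec_def less_imp_le)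
  ultimately show "0 \<le> x $ i" using LIMSEQ_le_const by blast
qed

lemma K_low:
  assumes X: "\<And>k. pos_vec (X k)" and lim: "X \<longlonglongrightarrow> x"
    and dpos: "\<And>k. 0 \<le> d k" and dlim: "d \<longlonglongrightarrow> 0" and mlim: "m \<longlonglongrightarrow> \<mu>"
    and eq: "\<And>k i. f (X k) $ i + d k = m k * X k $ i"
  shows "\<mu> * x $ i \<le> lowext x $ i"
proof (rule lowext_greatest)
  fix e :: real assume e: "0 < e"
  have x: "nonneg_vec x" using lim_nonneg[OF X lim] .
  have "\<forall>\<^sub>F k in sequentially. \<forall>j. X k $ j < (x + e *\<^sub>R 1) $ j"
  proof (rule eventually_all_finite)
    fix j
    have "(\<lambda>k. X k $ j) \<longlonglongrightarrow> x $ j" using lim by (rule tendsto_vec_nth)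
    moreover have "x $ j < (x + e *\<^sub>R 1) $ j" using e by simp
    ultimately show "\<forall>\<^sub>F k in sequentially. X k $ j < (x + e *\<^sub>R 1) $ j" by (rule order_tendstoD)
  qed
  then have ev: "\<forall>\<^sub>F k in sequentially. m k * X k $ i - d k \<le> f (x + e *\<^sub>R 1) $ i"
  proof (rule eventually_mono)
    fix k assume "\<forall>j. X k $ j < (x + e *\<^sub>R 1) $ j"
    then have "f (X k) $ i \<le> f (x + e *\<^sub>R 1) $ i"
      using fmono[of "X k" "x + e *\<^sub>R 1" i] X pos_shift[OF x e] by (auto intro: less_imp_le)
    then show "m k * X k $ i - d k \<le> f (x + e *\<^sub>R 1) $ i" using eq[of k i] by linarith
  qed
  have "(\<lambda>k. m k * X k $ i - d k) \<longlonglongrightarrow> \<mu> * x $ i - 0"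
    by (intro tendsto_intros mlim dlim tendsto_vec_nth lim)
  then show "\<mu> * x $ i \<le> f (x + e *\<^sub>R 1) $ i"
    using ev by (simp add: tendsto_upperbound)
qed

lemma K_upper:
  assumes X: "\<And>k. pos_vec (X k)" and lim: "X \<longlonglongrightarrow> x"
    and dpos: "\<And>k. 0 \<le> d k" and dlim: "d \<longlonglongrightarrow> 0" and mlim: "m \<longlonglongrightarrow> \<mu>"
    and eq: "\<And>k i. f (X k) $ i + d k = m k * X k $ i"
    and J: "J = {i. 0 < x $ i}" "J \<noteq> {}"
  shows "ereal \<mu> \<le> cw_upper (f0J f J)"
  unfolding cw_upper_def
proof (rule INF_greatest)
  fix y :: "real^'n" assume y: "y \<in> {x. pos_vec x}"
  have x: "nonneg_vec x" using lim_nonneg[OF X lim] .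
  have fin: "finite J" by simp
  define t where "t = Min ((\<lambda>j. y $ j / x $ j) ` J)"
  have "t \<in> (\<lambda>j. y $ j / x $ j) ` J"
    unfolding t_def by (rule Min_in) (use J(2) in auto)
  then obtain k where k: "k \<in> J" "t = y $ k / x $ k" by auto
  have xk: "0 < x $ k" using k J by auto
  have yk: "0 < y $ k" using y by (auto simp: pos_vec_def)
  have t: "0 < t" using k xk yk by auto
  have tx: "t * x $ j \<le> P0 J y $ j" for j
  proof (cases "j \<in> J")
    case True
    then have "t \<le> y $ j / x $ j" unfolding t_def by auto
    moreover have "0 < x $ j" using True J by auto
    ultimately show ?thesis using True by (auto simp: P0_def field_simps)
  next
    case False
    then have "\<not> 0 < x $ j" using J by auto
    moreover have "0 \<le> x $ j" using x by (auto simp: nonneg_vec_def)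
    ultimately have "x $ j = 0" by linarith
    then show ?thesis using False by (simp add: P0_def)
  qed
  have "t * lowext x $ k \<le> lowext (P0 J y) $ k"
    by (rule lowext_scale[OF x P0_nonneg[OF y[simplified]] t tx])
  moreover have "\<mu> * x $ k \<le> lowext x $ k" by (rule K_low[OF X lim dpos dlim mlim eq])
  ultimately have "t * (\<mu> * x $ k) \<le> lowext (P0 J y) $ k"
    using t by (meson mult_left_mono less_imp_le order_trans)
  then have "\<mu> * y $ k \<le> f0J f J y $ k"
    using g_term[of y J k] y k xk by (auto simp: field_simps)
  then have "\<mu> \<le> f0J f J y $ k / y $ k" using yk by (simp add: field_simps)
  also have "\<dots> \<le> Max (range (\<lambda>i. f0J f J y $ i / y $ i))" by (rule Max_ge) auto
  finally show "ereal \<mu> \<le> ereal (Max (range (\<lambda>i. f0J f J y $ i / y $ i)))" by simp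
qed


lemma K_lower:
  assumes X: "\<And>k. pos_vec (X k)" and lim: "X \<longlonglongrightarrow> x"
    and dpos: "\<And>k. 0 \<le> d k" and dlim: "d \<longlonglongrightarrow> 0" and mlim: "m \<longlonglongrightarrow> \<mu>"
    and eq: "\<And>k i. f (X k) $ i + d k = m k * X k $ i"
    and J: "J = {i. 0 < x $ i}" "J \<noteq> {}" "J \<noteq> UNIV"
  shows "cw_lower (finfJ f (- J)) \<le> ereal \<mu>"
  unfolding cw_lower_def
proof (rule SUP_least)
  fix y :: "real^'n" assume y: "y \<in> {x. pos_vec x}"
  then have y: "pos_vec y" by simp
  have ypos: "0 < y $ j" for j using y by (simp add: pos_vec_def)
  have x: "nonneg_vec x" using lim_nonneg[OF X lim] .
  have xJc: "j \<notin> J \<Longrightarrow> x $ j = 0" for j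
  proof -
    assume "j \<notin> J"
    then have "\<not> 0 < x $ j" using J by auto
    moreover have "0 \<le> x $ j" using x by (auto simp: nonneg_vec_def)
    ultimately show "x $ j = 0" by linarith
  qed
  have Xpos: "0 < X k $ j" for k j using X by (simp add: pos_vec_def)
  obtain i0 where i0: "i0 \<notin> J" using J(3) by auto
  define z where "z M = (\<chi> j. if j \<in> J then M else y $ j)" for M :: real
  have zpos: "0 < M \<Longrightarrow> pos_vec (z M)" for M using ypos by (simp add: z_def pos_vec_def)
  have stepa: "\<exists>i. i \<notin> J \<and> f (z M) $ i \<le> \<mu> * y $ i" if M: "0 < M" for M
  proof (rule ccontr)
    assume "\<not> (\<exists>i. i \<notin> J \<and> f (z M) $ i \<le> \<mu> * y $ i)"
    then have H: "i \<notin> J \<Longrightarrow> \<mu> * y $ i < f (z M) $ i" for i by auto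
    define \<rho> where "\<rho> = Min ((\<lambda>i. f (z M) $ i / y $ i) ` (- J))"
    have "\<mu> < \<rho>" unfolding \<rho>_def
    proof (subst Min_gr_iff)
      show "\<forall>a\<in>(\<lambda>i. f (z M) $ i / y $ i) ` (- J). \<mu> < a"
        using H ypos by (auto simp: field_simps)
    qed (use i0 in auto)
    then have ev1: "\<forall>\<^sub>F k in sequentially. m k < \<rho>" using order_tendstoD(2)[OF mlim] by blast
    have ev2: "\<forall>\<^sub>F k in sequentially. \<forall>j. j \<in> J \<longrightarrow> M * X k $ i0 < y $ i0 * X k $ j"
    proof (rule eventually_all_finite)
      fix j
      show "\<forall>\<^sub>F k in sequentially. j \<in> J \<longrightarrow> M * X k $ i0 < y $ i0 * X k $ j"
      proof (cases "j \<in> J")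
        case True
        have "(\<lambda>k. y $ i0 * X k $ j - M * X k $ i0) \<longlonglongrightarrow> y $ i0 * x $ j - M * x $ i0"
          by (intro tendsto_intros tendsto_vec_nth lim)
        moreover have "0 < y $ i0 * x $ j - M * x $ i0" using xJc[OF i0] True J ypos by auto
        ultimately have "\<forall>\<^sub>F k in sequentially. 0 < y $ i0 * X k $ j - M * X k $ i0"
          by (rule order_tendstoD)
        then show ?thesis by (rule eventually_mono) auto
      qed simp
    qed
    obtain k where k1: "m k < \<rho>" and k2: "\<forall>j. j \<in> J \<longrightarrow> M * X k $ i0 < y $ i0 * X k $ j"
      using eventually_happens'[OF _ eventually_conj[OF ev1 ev2]] by auto
    define s where "s = Max ((\<lambda>i. y $ i / X k $ i) ` (- J))"
    have "s \<in> (\<lambda>i. y $ i / X k $ i) ` (- J)"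
      unfolding s_def by (rule Max_in) (use i0 in auto)
    then obtain i1 where i1: "i1 \<notin> J" "s = y $ i1 / X k $ i1" by auto
    have s: "0 < s" using i1 ypos Xpos by auto
    have sge: "j \<notin> J \<Longrightarrow> y $ j / X k $ j \<le> s" for j unfolding s_def by (rule Max_ge) auto
    have le: "z M $ j \<le> s * X k $ j" for j
    proof (cases "j \<in> J")
      case True
      have "y $ i0 / X k $ i0 \<le> s" using sge[OF i0] .
      then have "y $ i0 * X k $ j \<le> s * X k $ i0 * X k $ j"
        using Xpos[of k i0] Xpos[of k j] by (simp add: field_simps)
      moreover have "M * X k $ i0 < y $ i0 * X k $ j" using k2 True by auto
      ultimately have "M * X k $ i0 < (s * X k $ j) * X k $ i0" by (simp add: algebra_simps)
      then have "M < s * X k $ j" using Xpos[of k i0] by simp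
      then show ?thesis using True by (simp add: z_def)
    next
      case False
      then show ?thesis using sge[OF False] Xpos[of k j] by (simp add: z_def field_simps)
    qed
    have "f (z M) $ i1 \<le> s * f (X k) $ i1" by (rule fup[OF X zpos[OF M] s le])
    also have "\<dots> = s * (m k * X k $ i1 - d k)"
    proof -
      have "f (X k) $ i1 = m k * X k $ i1 - d k" using eq[of k i1] by linarith
      then show ?thesis by simp
    qed
    also have "\<dots> \<le> s * (m k * X k $ i1)" using s dpos[of k] by (simp add: mult_left_mono)
    also have "\<dots> = m k * y $ i1" using i1 Xpos[of k i1] by (simp add: field_simps)
    finally have "f (z M) $ i1 / y $ i1 \<le> m k" using ypos[of i1] by (simp add: field_simps)
    moreover have "\<rho> \<le> f (z M) $ i1 / y $ i1" unfolding \<rho>_def by (rule Min_le) (use i1 in auto)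
    ultimately show False using k1 by linarith
  qed
  have zmono: "M \<le> M' \<Longrightarrow> 0 < M \<Longrightarrow> f (z M) $ i \<le> f (z M') $ i" for M M' i
  proof -
    assume a: "M \<le> M'" "0 < M"
    show ?thesis by (rule fmono[OF zpos zpos]) (use a in \<open>auto simp: z_def\<close>)
  qed
  have stepb: "\<exists>i. i \<notin> J \<and> (\<forall>M>0. f (z M) $ i \<le> \<mu> * y $ i)"
  proof (rule ccontr)
    assume "\<not> ?thesis"
    then have "\<forall>i\<in>-J. \<exists>M. 0 < M \<and> \<mu> * y $ i < f (z M) $ i" by (auto simp: not_le)
    then obtain Mf where Mf: "\<And>i. i \<in> - J \<Longrightarrow> 0 < Mf i \<and> \<mu> * y $ i < f (z (Mf i)) $ i"
      by metis
    define M where "M = Max (Mf ` (- J))"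
    have MfM: "i \<in> - J \<Longrightarrow> Mf i \<le> M" for i unfolding M_def by (rule Max_ge) auto
    have M: "0 < M" using MfM[of i0] Mf[of i0] i0 by auto
    obtain i where i: "i \<notin> J" "f (z M) $ i \<le> \<mu> * y $ i" using stepa[OF M] by auto
    have "f (z (Mf i)) $ i \<le> f (z M) $ i" using zmono[of "Mf i" M i] MfM[of i] Mf[of i] i by auto
    then show False using Mf[of i] i by auto
  qed
  then obtain i where i: "i \<notin> J" "\<And>M. 0 < M \<Longrightarrow> f (z M) $ i \<le> \<mu> * y $ i" by auto
  have up: "upext (Pinf (- J) (ereal_vec y)) i \<le> ereal (\<mu> * y $ i)"
  proof (rule upext_le)
    fix v assume v: "pos_vec v" "\<And>j. ereal (v $ j) \<le> Pinf (- J) (ereal_vec y) j"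
    define M where "M = max 1 (Max (range (\<lambda>j. v $ j)))"
    have M: "0 < M" unfolding M_def by auto
    have "v $ j \<le> z M $ j" for j
    proof (cases "j \<in> J")
      case True
      have "v $ j \<le> Max (range (\<lambda>j. v $ j))" by (rule Max_ge) auto
      then have "v $ j \<le> M" unfolding M_def by (metis le_max_iff_disj)
      then show ?thesis using True unfolding z_def by auto
    next
      case False
      then show ?thesis using v(2)[of j] by (simp add: z_def Pinf_def ereal_vec_def)
    qed
    then have "f v $ i \<le> f (z M) $ i" by (rule fmono[OF v(1) zpos[OF M]])
    then show "ereal (f v $ i) \<le> ereal (\<mu> * y $ i)" using i(2)[OF M] by simp
  qed
  have "Min (range (\<lambda>j. finfJ f (- J) (ereal_vec y) j / ereal (y $ j)))
      \<le> finfJ f (- J) (ereal_vec y) i / ereal (y $ i)" by (rule Min_le) auto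
  also have "\<dots> = upext (Pinf (- J) (ereal_vec y)) i / ereal (y $ i)"
    using finf_term[OF y J(2)] i by simp
  also have "\<dots> \<le> ereal (\<mu> * y $ i) / ereal (y $ i)"
    using ereal_divide_right_mono[OF up, of "ereal (y $ i)"] ypos[of i] by simp
  also have "\<dots> = ereal \<mu>" using ypos[of i] by simp
  finally show "Min (range (\<lambda>j. finfJ f (- J) (ereal_vec y) j / ereal (y $ j))) \<le> ereal \<mu>" .
qed

end


definition stdsimp :: "'a::finite set \<Rightarrow> (real^'a) set" where
  "stdsimp S = {x. (\<forall>i. 0 \<le> x $ i) \<and> (\<forall>i. i \<notin> S \<longrightarrow> x $ i = 0) \<and> (\<Sum>i\<in>UNIV. x $ i) = 1}"

lemma stdsimp_le1: "x \<in> stdsimp S \<Longrightarrow> x $ i \<le> 1"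
proof -
  assume x: "x \<in> stdsimp S"
  have "x $ i \<le> (\<Sum>i\<in>UNIV. x $ i)" by (rule member_le_sum) (use x in \<open>auto simp: stdsimp_def\<close>)
  then show ?thesis using x by (simp add: stdsimp_def)
qed

lemma stdsimp_compact: "compact (stdsimp S)"
proof -
  have eq: "stdsimp S = (\<Inter>i. {x::real^'a. 0 \<le> x $ i}) \<inter> (\<Inter>i\<in>-S. {x. x $ i = 0}) \<inter> {x. (\<Sum>i\<in>UNIV. x $ i) = 1}"
    by (auto simp: stdsimp_def)
  have "closed (stdsimp S)" unfolding eq
    by (intro closed_Int closed_INT ballI closed_Collect_eq closed_Collect_le continuous_intros continuous_on_component)
  moreover have "stdsimp S \<subseteq> cbox 0 1"
    using stdsimp_le1[of _ S] unfolding stdsimp_def by (auto simp: mem_box_cart)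
  then have "bounded (stdsimp S)" using bounded_cbox bounded_subset by blast
  ultimately show ?thesis using compact_eq_bounded_closed by blast
qed

lemma stdsimp_convex: "convex (stdsimp S)"
  unfolding convex_def
proof (intro ballI allI impI)
  fix x y :: "real^'a" and u v :: real
  assume x: "x \<in> stdsimp S" and y: "y \<in> stdsimp S" and uv: "0 \<le> u" "0 \<le> v" "u + v = 1"
  have "(\<Sum>i\<in>UNIV. (u *\<^sub>R x + v *\<^sub>R y) $ i) = u * (\<Sum>i\<in>UNIV. x $ i) + v * (\<Sum>i\<in>UNIV. y $ i)"
    by (simp add: sum.distrib sum_distrib_left)
  also have "\<dots> = 1" using x y uv by (simp add: stdsimp_def)
  finally show "u *\<^sub>R x + v *\<^sub>R y \<in> stdsimp S" using x y uv by (simp add: stdsimp_def)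
qed

lemma stdsimp_ne: "S \<noteq> {} \<Longrightarrow> stdsimp S \<noteq> {}"
proof -
  assume "S \<noteq> {}"
  then obtain s where s: "s \<in> S" by auto
  have "((\<chi> i. if i = s then 1 else 0) :: real^'a) \<in> stdsimp S"
    using s by (auto simp: stdsimp_def)
  then show ?thesis by auto
qed

lemma stdsimp_fix:
  fixes g :: "real^'a::finite \<Rightarrow> real^'a"
  assumes S: "S \<noteq> {}" and cont: "continuous_on (stdsimp S) g"
    and gpos: "\<And>x i. x \<in> stdsimp S \<Longrightarrow> i \<in> S \<Longrightarrow> 0 < g x $ i"
    and gz: "\<And>x i. x \<in> stdsimp S \<Longrightarrow> i \<notin> S \<Longrightarrow> g x $ i = 0"
  shows "\<exists>x\<in>stdsimp S. \<exists>\<nu>>0. g x = \<nu> *\<^sub>R x"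
proof -
  obtain s where s: "s \<in> S" using S by auto
  have gnn: "x \<in> stdsimp S \<Longrightarrow> 0 \<le> g x $ i" for x i
    using gpos gz by (cases "i \<in> S") (auto intro: less_imp_le)
  have spos: "x \<in> stdsimp S \<Longrightarrow> 0 < (\<Sum>i\<in>UNIV. g x $ i)" for x
  proof -
    assume x: "x \<in> stdsimp S"
    have "g x $ s \<le> (\<Sum>i\<in>UNIV. g x $ i)" by (rule member_le_sum) (use x gnn in auto)
    then show ?thesis using gpos[OF x s] by linarith
  qed
  define h where "h x = (1 / (\<Sum>i\<in>UNIV. g x $ i)) *\<^sub>R g x" for x
  have "continuous_on (stdsimp S) h" unfolding h_def
    by (intro continuous_intros continuous_on_component cont) (use spos in force)
  moreover have "h \<in> stdsimp S \<rightarrow> stdsimp S"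
  proof
    fix x assume x: "x \<in> stdsimp S"
    have "(\<Sum>i\<in>UNIV. h x $ i) = 1" using spos[OF x]
      by (simp add: h_def sum_divide_distrib[symmetric])
    then show "h x \<in> stdsimp S" using gnn[OF x] gz[OF x] spos[OF x] by (auto simp: stdsimp_def h_def)
  qed
  ultimately obtain x where x: "x \<in> stdsimp S" "h x = x"
    using brouwer[OF stdsimp_compact stdsimp_convex stdsimp_ne[OF S]] by blast
  have "g x = (\<Sum>i\<in>UNIV. g x $ i) *\<^sub>R h x"
    using spos[OF x(1)] unfolding h_def by simp
  then have "g x = (\<Sum>i\<in>UNIV. g x $ i) *\<^sub>R x" using x(2) by simp
  then show ?thesis using x(1) spos[OF x(1)] by blast
qed

lemma stdsimp_subseq:
  fixes X :: "nat \<Rightarrow> real^'a::finite" and m :: "nat \<Rightarrow> real"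
  assumes X: "\<And>k. X k \<in> stdsimp S" and m: "\<And>k. 0 \<le> m k \<and> m k \<le> B"
  obtains x \<mu> r where "x \<in> stdsimp S" "strict_mono (r::nat\<Rightarrow>nat)" "(X \<circ> r) \<longlonglongrightarrow> x" "(m \<circ> r) \<longlonglongrightarrow> \<mu>"
proof -
  have "compact (stdsimp S \<times> {0..B})" by (intro compact_Times stdsimp_compact compact_Icc)
  then have "seq_compact (stdsimp S \<times> {0..B})" by (rule compact_imp_seq_compact)
  moreover have "\<forall>k. (X k, m k) \<in> stdsimp S \<times> {0..B}" using X m by auto
  ultimately obtain l r where l: "l \<in> stdsimp S \<times> {0..B}" "strict_mono (r::nat\<Rightarrow>nat)"
    "((\<lambda>k. (X k, m k)) \<circ> r) \<longlonglongrightarrow> l" by (rule seq_compactE)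
  have "(X \<circ> r) \<longlonglongrightarrow> fst l" using tendsto_fst[OF l(3)] by (simp add: comp_def)
  moreover have "(m \<circ> r) \<longlonglongrightarrow> snd l" using tendsto_snd[OF l(3)] by (simp add: comp_def)
  ultimately show ?thesis using that l by (metis mem_Times_iff)
qed

lemma stdsimp_supp:
  assumes x: "x \<in> stdsimp S"
  shows "{i. 0 < x $ i} \<noteq> {}"
proof
  assume "{i. 0 < x $ i} = {}"
  then have "\<not> 0 < x $ i" for i by auto
  moreover have "0 \<le> x $ i" for i using x by (simp add: stdsimp_def)
  ultimately have "x $ i = 0" for i by (meson order_antisym not_less)
  then show False using x by (simp add: stdsimp_def)
qed


context ophom begin

lemma stdsimp_nonneg: "x \<in> stdsimp S \<Longrightarrow> nonneg_vec x"
  by (simp add: stdsimp_def nonneg_vec_def)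

lemma boundary_contra:
  assumes H: "\<forall>J. J \<noteq> {} \<and> J \<noteq> UNIV \<longrightarrow> cw_upper (f0J f J) < cw_lower (finfJ f (- J))"
    and X: "\<And>k. pos_vec (X k)" and lim: "X \<longlonglongrightarrow> x"
    and dpos: "\<And>k. 0 \<le> d k" and dlim: "d \<longlonglongrightarrow> 0" and mlim: "m \<longlonglongrightarrow> \<mu>"
    and eq: "\<And>k i. f (X k) $ i + d k = m k * X k $ i"
    and xs: "x \<in> stdsimp UNIV" and xnp: "\<not> pos_vec x"
  shows False
proof -
  define J where "J = {i. 0 < x $ i}"
  have J1: "J \<noteq> {}" using stdsimp_supp[OF xs] J_def by simp
  have J2: "J \<noteq> UNIV" using xnp unfolding J_def pos_vec_def by auto
  have "ereal \<mu> \<le> cw_upper (f0J f J)" by (rule K_upper[OF X lim dpos dlim mlim eq J_def J1])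
  moreover have "cw_lower (finfJ f (- J)) \<le> ereal \<mu>" by (rule K_lower[OF X lim dpos dlim mlim eq J_def J1 J2])
  moreover have "cw_upper (f0J f J) < cw_lower (finfJ f (- J))" using H J1 J2 by blast
  ultimately show False by simp
qed

lemma existence:
  assumes H: "\<forall>J. J \<noteq> {} \<and> J \<noteq> UNIV \<longrightarrow> cw_upper (f0J f J) < cw_lower (finfJ f (- J))"
  shows "eigvecs f \<noteq> {}"
proof -
  define dl where "dl k = 1 / (real k + 1)" for k :: nat
  have dl: "0 < dl k" "dl k \<le> 1" for k by (auto simp: dl_def)
  have ex: "\<exists>x\<in>stdsimp UNIV. \<exists>\<nu>>0. f (x + dl k *\<^sub>R 1) = \<nu> *\<^sub>R x" for k
  proof (rule stdsimp_fix)
    show "continuous_on (stdsimp UNIV) (\<lambda>x. f (x + dl k *\<^sub>R 1))"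
      by (rule continuous_on_compose2[OF fcont]) (auto intro!: continuous_intros pos_shift stdsimp_nonneg dl)
    show "0 < f (x + dl k *\<^sub>R 1) $ i" if "x \<in> stdsimp UNIV" for x i
      using fpos'[OF pos_shift[OF stdsimp_nonneg[OF that] dl(1)]] .
  qed auto
  have "\<forall>k. \<exists>p. fst p \<in> stdsimp UNIV \<and> 0 < snd p \<and> f (fst p + dl k *\<^sub>R 1) = snd p *\<^sub>R fst p"
  proof
    fix k
    from ex[of k] obtain x \<nu> where "x \<in> stdsimp UNIV" "0 < \<nu>" "f (x + dl k *\<^sub>R 1) = \<nu> *\<^sub>R x" by blast
    then show "\<exists>p. fst p \<in> stdsimp UNIV \<and> 0 < snd p \<and> f (fst p + dl k *\<^sub>R 1) = snd p *\<^sub>R fst p"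
      by (intro exI[of _ "(x, \<nu>)"]) simp
  qed
  then have "\<exists>P. \<forall>k. fst (P k) \<in> stdsimp UNIV \<and> 0 < snd (P k) \<and> f (fst (P k) + dl k *\<^sub>R 1) = snd (P k) *\<^sub>R fst (P k)"
    by (rule choice)
  then obtain P where P: "\<forall>k. fst (P k) \<in> stdsimp UNIV \<and> 0 < snd (P k) \<and> f (fst (P k) + dl k *\<^sub>R 1) = snd (P k) *\<^sub>R fst (P k)"
    by blast
  define xs where "xs k = fst (P k)" for k
  define \<nu> where "\<nu> k = snd (P k)" for k
  have xs: "\<And>k. xs k \<in> stdsimp UNIV" and \<nu>: "\<And>k. 0 < \<nu> k"
    and eqx: "\<And>k. f (xs k + dl k *\<^sub>R 1) = \<nu> k *\<^sub>R xs k" using P by (auto simp: xs_def \<nu>_def)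
  define B where "B = (\<Sum>i\<in>UNIV. f (2 *\<^sub>R (1::real^'n)) $ i)"
  have \<nu>B: "0 \<le> \<nu> k \<and> \<nu> k \<le> B" for k
  proof -
    have "(\<Sum>i\<in>UNIV. (\<nu> k *\<^sub>R xs k) $ i) = \<nu> k * (\<Sum>i\<in>UNIV. xs k $ i)"
      by (simp add: sum_distrib_left)
    then have "\<nu> k = (\<Sum>i\<in>UNIV. (\<nu> k *\<^sub>R xs k) $ i)"
      using xs[of k] by (simp add: stdsimp_def)
    also have "\<dots> = (\<Sum>i\<in>UNIV. f (xs k + dl k *\<^sub>R 1) $ i)" using eqx[of k] by simp
    also have "\<dots> \<le> B" unfolding B_def
    proof (rule sum_mono, rule fmono)
      show "pos_vec (xs k + dl k *\<^sub>R 1)" by (rule pos_shift[OF stdsimp_nonneg[OF xs] dl(1)])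
      show "pos_vec (2 *\<^sub>R (1::real^'n))" by (simp add: pos_vec_def)
      fix j show "(xs k + dl k *\<^sub>R 1) $ j \<le> (2 *\<^sub>R (1::real^'n)) $ j"
        using stdsimp_le1[OF xs[of k], of j] dl(2)[of k] by simp
    qed
    finally show ?thesis using \<nu>[of k] by simp
  qed
  obtain x \<mu> r where xr: "x \<in> stdsimp UNIV" "strict_mono (r::nat\<Rightarrow>nat)"
    "(xs \<circ> r) \<longlonglongrightarrow> x" "(\<nu> \<circ> r) \<longlonglongrightarrow> \<mu>"
    by (rule stdsimp_subseq[OF xs \<nu>B])
  have dllim: "dl \<longlonglongrightarrow> 0" unfolding dl_def using LIMSEQ_inverse_real_of_nat_add[of 0]
    by (simp add: divide_inverse add.commute)
  define Y where "Y k = xs (r k) + dl (r k) *\<^sub>R 1" for k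
  have Ypos: "pos_vec (Y k)" for k unfolding Y_def by (rule pos_shift[OF stdsimp_nonneg[OF xs] dl(1)])
  have dlr: "(\<lambda>k. dl (r k)) \<longlonglongrightarrow> 0" using LIMSEQ_subseq_LIMSEQ[OF dllim xr(2)] by (simp add: comp_def)
  have Ylim: "Y \<longlonglongrightarrow> x"
  proof -
    have "(\<lambda>k. xs (r k) + dl (r k) *\<^sub>R (1::real^'n)) \<longlonglongrightarrow> x + 0 *\<^sub>R 1"
      using xr(3) dlr by (intro tendsto_intros) (simp_all add: comp_def)
    then show ?thesis unfolding Y_def by simp
  qed
  have Yeq: "f (Y k) $ i + \<nu> (r k) * dl (r k) = \<nu> (r k) * Y k $ i" for k i
    using eqx[of "r k"] by (simp add: Y_def algebra_simps)
  have mlim: "(\<lambda>k. \<nu> (r k)) \<longlonglongrightarrow> \<mu>" using xr(4) by (simp add: comp_def)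
  have dlim: "(\<lambda>k. \<nu> (r k) * dl (r k)) \<longlonglongrightarrow> \<mu> * 0" by (intro tendsto_intros mlim dlr)
  show ?thesis
  proof (cases "pos_vec x")
    case True
    have "(\<lambda>k. f (Y k)) \<longlonglongrightarrow> f x"
      by (rule continuous_on_tendsto_compose[OF fcont Ylim]) (use True Ypos in auto)
    moreover have "(\<lambda>k. f (Y k)) = (\<lambda>k. \<nu> (r k) *\<^sub>R xs (r k))" using eqx by (simp add: Y_def)
    moreover have "(\<lambda>k. \<nu> (r k) *\<^sub>R xs (r k)) \<longlonglongrightarrow> \<mu> *\<^sub>R x"
      using mlim xr(3) by (intro tendsto_intros) (simp_all add: comp_def)
    ultimately have A: "(\<lambda>k. f (Y k)) \<longlonglongrightarrow> f x" "(\<lambda>k. f (Y k)) \<longlonglongrightarrow> \<mu> *\<^sub>R x" by simp_all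
    have "f x = \<mu> *\<^sub>R x" by (rule LIMSEQ_unique[OF A])
    then have "x \<in> eigvecs f" using True by (auto simp: eigvecs_def)
    then show ?thesis by auto
  next
    case False
    have dnn: "0 \<le> \<nu> (r k) * dl (r k)" for k using \<nu>[of "r k"] dl(1)[of "r k"] by simp
    show ?thesis using boundary_contra[OF H Ypos Ylim dnn _ mlim Yeq xr(1) False] dlim by simp
  qed
qed

end


lemma hm_set:
  "{(y $ i * x0 $ j) / (x0 $ i * y $ j) | i j. True} = (\<lambda>p. (y $ fst p * x0 $ snd p) / (x0 $ fst p * y $ snd p)) ` UNIV"
proof (rule set_eqI, rule iffI)
  fix z assume "z \<in> {(y $ i * x0 $ j) / (x0 $ i * y $ j) | i j. True}"
  then obtain i j where "z = (y $ i * x0 $ j) / (x0 $ i * y $ j)" by blast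
  then show "z \<in> (\<lambda>p. (y $ fst p * x0 $ snd p) / (x0 $ fst p * y $ snd p)) ` UNIV"
    by (intro rev_image_eqI[of "(i,j)"]) auto
qed auto

lemma hm_ge:
  fixes x0 y :: "real^'n::finite"
  assumes x0: "pos_vec x0" and y: "pos_vec y"
  shows "ln ((y $ i * x0 $ j) / (x0 $ i * y $ j)) \<le> hilbert_metric x0 y"
proof -
  have pos: "0 < (y $ i * x0 $ j) / (x0 $ i * y $ j)" using x0 y by (simp add: pos_vec_def)
  have "(y $ i * x0 $ j) / (x0 $ i * y $ j) \<le> Max {(y $ i * x0 $ j) / (x0 $ i * y $ j) | i j. True}"
    unfolding hm_set by (rule Max_ge) (auto intro: rev_image_eqI[of "(i,j)"])
  then show ?thesis unfolding hilbert_metric_def using pos by simp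
qed

lemma hm_big:
  fixes y :: "real^'n::finite"
  assumes y: "pos_vec y" and C: "C < hilbert_metric 1 y"
  shows "\<exists>i j. exp C < y $ i / y $ j"
proof -
  let ?S = "{(y $ i * (1::real^'n) $ j) / ((1::real^'n) $ i * y $ j) | i j. True}"
  have "Max ?S \<in> ?S" unfolding hm_set by (rule Max_in) auto
  then obtain i j where ij: "Max ?S = y $ i / y $ j" by auto
  have pos: "0 < y $ i / y $ j" using y by (simp add: pos_vec_def)
  have "C < ln (y $ i / y $ j)" using C ij unfolding hilbert_metric_def by simp
  then have "exp C < exp (ln (y $ i / y $ j))" by simp
  then show ?thesis using pos by auto
qed

context ophom begin

lemma bounded:
  assumes H: "\<forall>J. J \<noteq> {} \<and> J \<noteq> UNIV \<longrightarrow> cw_upper (f0J f J) < cw_lower (finfJ f (- J))"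
  shows "hilbert_bounded (eigvecs f)"
proof (rule ccontr)
  assume nb: "\<not> hilbert_bounded (eigvecs f)"
  have one: "pos_vec (1::real^'n)" by (simp add: pos_vec_def)
  define B where "B = (\<Sum>i\<in>UNIV. f (1::real^'n) $ i)"
  have ex: "\<exists>p. fst p \<in> stdsimp UNIV \<and> pos_vec (fst p) \<and> 0 \<le> fst (snd p) \<and> fst (snd p) \<le> B
     \<and> f (fst p) = fst (snd p) *\<^sub>R fst p
     \<and> exp (real k) < fst p $ fst (snd (snd p)) / fst p $ snd (snd (snd p))" for k
  proof -
    obtain x where x: "x \<in> eigvecs f" "real k < hilbert_metric 1 x"
      using nb one unfolding hilbert_bounded_def by (meson not_le)
    obtain \<mu>0 where xp: "pos_vec x" and fx: "f x = \<mu>0 *\<^sub>R x" using x(1) by (auto simp: eigvecs_def)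
    obtain i j where ij: "exp (real k) < x $ i / x $ j" using hm_big[OF xp x(2)] by auto
    define c where "c = (\<Sum>i\<in>UNIV. x $ i)"
    have xi: "0 < x $ i" for i using xp by (simp add: pos_vec_def)
    have c: "0 < c" unfolding c_def using xi by (simp add: sum_pos)
    define x' where "x' = (1 / c) *\<^sub>R x"
    have x'p: "pos_vec x'" unfolding x'_def using pos_scale[OF xp] c by simp
    have x's: "x' \<in> stdsimp UNIV"
    proof -
      have "(\<Sum>i\<in>UNIV. x' $ i) = (1/c) * c" unfolding x'_def c_def by (simp add: sum_distrib_left)
      then show ?thesis using c x'p by (auto simp: stdsimp_def pos_vec_def less_imp_le)
    qed
    have fx': "f x' = \<mu>0 *\<^sub>R x'"
    proof -
      have "f x' $ l = (\<mu>0 *\<^sub>R x') $ l" for l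
        unfolding x'_def using fhom'[OF xp, of "1/c" l] c fx by simp
      then show ?thesis by (simp add: vec_eq_iff)
    qed
    have ratio: "x' $ i / x' $ j = x $ i / x $ j" unfolding x'_def using c by simp
    have "0 < x' $ i" using x'p by (simp add: pos_vec_def)
    then have \<mu>0: "0 < \<mu>0" using fpos'[OF x'p, of i] fx' by (auto simp: zero_less_mult_iff)
    have "\<mu>0 = (\<Sum>l\<in>UNIV. (\<mu>0 *\<^sub>R x') $ l)"
    proof -
      have "(\<Sum>l\<in>UNIV. (\<mu>0 *\<^sub>R x') $ l) = \<mu>0 * (\<Sum>l\<in>UNIV. x' $ l)" by (simp add: sum_distrib_left)
      then show ?thesis using x's by (simp add: stdsimp_def)
    qed
    also have "\<dots> = (\<Sum>l\<in>UNIV. f x' $ l)" using fx' by simp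
    also have "\<dots> \<le> B" unfolding B_def
      by (rule sum_mono, rule fmono[OF x'p one]) (use stdsimp_le1[OF x's] in simp)
    finally have "\<mu>0 \<le> B" .
    then show ?thesis using x's x'p \<mu>0 fx' ij ratio
      by (intro exI[of _ "(x', \<mu>0, i, j)"]) auto
  qed
  then have "\<exists>P. \<forall>k. fst (P k) \<in> stdsimp UNIV \<and> pos_vec (fst (P k)) \<and> 0 \<le> fst (snd (P k)) \<and> fst (snd (P k)) \<le> B
     \<and> f (fst (P k)) = fst (snd (P k)) *\<^sub>R fst (P k)
     \<and> exp (real k) < fst (P k) $ fst (snd (snd (P k))) / fst (P k) $ snd (snd (snd (P k)))"
    by (intro choice allI)
  then obtain P where P: "\<forall>k. fst (P k) \<in> stdsimp UNIV \<and> pos_vec (fst (P k)) \<and> 0 \<le> fst (snd (P k)) \<and> fst (snd (P k)) \<le> B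
     \<and> f (fst (P k)) = fst (snd (P k)) *\<^sub>R fst (P k)
     \<and> exp (real k) < fst (P k) $ fst (snd (snd (P k))) / fst (P k) $ snd (snd (snd (P k)))" by blast
  define xs where "xs k = fst (P k)" for k
  define ms where "ms k = fst (snd (P k))" for k
  define ik where "ik k = fst (snd (snd (P k)))" for k
  define jk where "jk k = snd (snd (snd (P k)))" for k
  have xs: "\<And>k. xs k \<in> stdsimp UNIV" and xsp: "\<And>k. pos_vec (xs k)"
    and msB: "\<And>k. 0 \<le> ms k \<and> ms k \<le> B" and fxs: "\<And>k. f (xs k) = ms k *\<^sub>R xs k"
    and rat: "\<And>k. exp (real k) < xs k $ ik k / xs k $ jk k"
    using P unfolding xs_def ms_def ik_def jk_def by auto
  obtain x \<mu> r where xr: "x \<in> stdsimp UNIV" "strict_mono (r::nat\<Rightarrow>nat)"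
    "(xs \<circ> r) \<longlonglongrightarrow> x" "(ms \<circ> r) \<longlonglongrightarrow> \<mu>"
    by (rule stdsimp_subseq[OF xs msB])
  have Xlim: "(\<lambda>k. xs (r k)) \<longlonglongrightarrow> x" using xr(3) by (simp add: comp_def)
  have mlim: "(\<lambda>k. ms (r k)) \<longlonglongrightarrow> \<mu>" using xr(4) by (simp add: comp_def)
  show False
  proof (cases "pos_vec x")
    case True
    define R where "R = Max (range (\<lambda>p. x $ fst p / x $ snd p)) + 1"
    have ev1: "\<forall>\<^sub>F k in sequentially. \<forall>i j. xs (r k) $ i / xs (r k) $ j < R"
    proof (rule eventually_all_finite, rule eventually_all_finite)
      fix i j
      have "(\<lambda>k. xs (r k) $ i / xs (r k) $ j) \<longlonglongrightarrow> x $ i / x $ j"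
      proof (intro tendsto_intros tendsto_vec_nth Xlim)
        show "x $ j \<noteq> 0" using True by (simp add: pos_vec_def) (metis less_irrefl)
      qed
      moreover have "x $ i / x $ j < R"
      proof -
        have "x $ fst (i, j) / x $ snd (i, j) \<le> Max (range (\<lambda>p. x $ fst p / x $ snd p))"
          by (rule Max_ge) (auto intro: rev_image_eqI[of "(i,j)"])
        then show ?thesis unfolding R_def by simp
      qed
      ultimately show "\<forall>\<^sub>F k in sequentially. xs (r k) $ i / xs (r k) $ j < R"
        by (rule order_tendstoD)
    qed
    obtain N :: nat where N: "R < real N" using reals_Archimedean2 by auto
    have ev2: "\<forall>\<^sub>F k in sequentially. R < real k"
      unfolding eventually_sequentially
    proof (intro exI allI impI)
      fix k assume "N \<le> k"
      then have "real N \<le> real k" by simp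
      then show "R < real k" using N by linarith
    qed
    obtain k where k1: "\<forall>i j. xs (r k) $ i / xs (r k) $ j < R" and k2: "R < real k"
      using eventually_happens'[OF _ eventually_conj[OF ev1 ev2]] by auto
    have "real k \<le> real (r k)" using seq_suble[OF xr(2), of k] by simp
    also have "real (r k) < exp (real (r k))" using exp_ge_add_one_self[of "real (r k)"] by linarith
    also have "\<dots> < xs (r k) $ ik (r k) / xs (r k) $ jk (r k)" by (rule rat)
    also have "\<dots> < R" using k1 by blast
    finally show False using k2 by linarith
  next
    case False
    have eq: "f (xs (r k)) $ i + 0 = ms (r k) * xs (r k) $ i" for k i using fxs[of "r k"] by simp
    show False by (rule boundary_contra[OF H xsp Xlim _ _ mlim eq xr(1) False]) auto
  qed
qed

end

context ophom begin

lemma eig_pos: "pos_vec x \<Longrightarrow> f x = \<mu> *\<^sub>R x \<Longrightarrow> 0 < \<mu>"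
proof -
  assume x: "pos_vec x" and fx: "f x = \<mu> *\<^sub>R x"
  obtain i :: 'n where True by auto
  have "0 < f x $ i" using fpos'[OF x] .
  moreover have "0 < x $ i" using x by (simp add: pos_vec_def)
  ultimately show "0 < \<mu>" using fx by (auto simp: zero_less_mult_iff)
qed

lemma R1:
  assumes x: "pos_vec x" and fx: "f x = \<mu> *\<^sub>R x"
  shows "cw_upper (f0J f J) \<le> ereal \<mu>"
proof -
  have \<mu>: "0 < \<mu>" by (rule eig_pos[OF x fx])
  have xi: "0 < x $ i" for i using x by (simp add: pos_vec_def)
  have "Max (range (\<lambda>i. f0J f J x $ i / x $ i)) \<le> \<mu>"
  proof (rule Max.boundedI)
    show "a \<le> \<mu>" if ha: "a \<in> range (\<lambda>i. f0J f J x $ i / x $ i)" for a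
    proof -
      obtain i where a: "a = f0J f J x $ i / x $ i" using ha by auto
      show ?thesis
      proof (cases "i \<in> J")
        case True
        have "lowext (P0 J x) $ i \<le> f x $ i"
          by (rule lowext_le_pos[OF P0_nonneg[OF x] x]) (use xi in \<open>auto simp: P0_def less_imp_le\<close>)
        then have "f0J f J x $ i \<le> \<mu> * x $ i" using g_term[OF x, of J i] True fx by simp
        then have "f0J f J x $ i / x $ i \<le> \<mu>" using xi[of i] by (simp add: divide_le_eq)
        then show ?thesis using a by simp
      next
        case False
        then show ?thesis using a g_term[OF x, of J i] \<mu> by simp
      qed
    qed
  qed auto
  moreover have "cw_upper (f0J f J) \<le> ereal (Max (range (\<lambda>i. f0J f J x $ i / x $ i)))"
    unfolding cw_upper_def by (rule INF_lower) (use x in auto)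
  ultimately show ?thesis by (meson ereal_less_eq(3) order_trans)
qed

lemma R2:
  assumes x: "pos_vec x" and fx: "f x = \<mu> *\<^sub>R x" and J: "J \<noteq> {}"
  shows "ereal \<mu> \<le> cw_lower (finfJ f (- J))"
proof -
  have \<mu>: "0 < \<mu>" by (rule eig_pos[OF x fx])
  have xi: "0 < x $ i" for i using x by (simp add: pos_vec_def)
  have "ereal \<mu> \<le> Min (range (\<lambda>i. finfJ f (- J) (ereal_vec x) i / ereal (x $ i)))"
  proof (rule Min.boundedI)
    show "ereal \<mu> \<le> a" if ha: "a \<in> range (\<lambda>i. finfJ f (- J) (ereal_vec x) i / ereal (x $ i))" for a
    proof -
      obtain i where a: "a = finfJ f (- J) (ereal_vec x) i / ereal (x $ i)" using ha by auto
      show ?thesis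
      proof (cases "i \<in> J")
        case True
        then show ?thesis using a finf_term[OF x J, of i] inf_div[OF xi[of i]] by simp
      next
        case False
        have "ereal (f x $ i) \<le> upext (Pinf (- J) (ereal_vec x)) i"
          by (rule upext_upper[OF x]) (simp add: Pinf_def ereal_vec_def)
        then have "ereal (\<mu> * x $ i) / ereal (x $ i) \<le> upext (Pinf (- J) (ereal_vec x)) i / ereal (x $ i)"
          using fx xi[of i] by (intro ereal_divide_right_mono) auto
        then show ?thesis using a finf_term[OF x J, of i] False xi[of i] by simp
      qed
    qed
  qed auto
  moreover have "Min (range (\<lambda>i. finfJ f (- J) (ereal_vec x) i / ereal (x $ i))) \<le> cw_lower (finfJ f (- J))"
    unfolding cw_lower_def by (rule SUP_upper) (use x in auto)
  ultimately show ?thesis by (rule order_trans)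
qed

end

context ophom begin

lemma L1:
  assumes J: "J \<noteq> {}" and \<mu>: "0 < \<mu>" and hyp: "ereal \<mu> \<le> cw_upper (f0J f J)"
  shows "\<exists>u. nonneg_vec u \<and> (\<exists>k\<in>J. 0 < u $ k) \<and> (\<forall>i. i \<notin> J \<longrightarrow> u $ i = 0)
    \<and> (\<forall>v. pos_vec v \<longrightarrow> (\<forall>i. u $ i \<le> v $ i) \<longrightarrow> (\<forall>i. \<mu> * u $ i \<le> f v $ i))"
proof -
  define dl where "dl k = 1 / (real k + 1)" for k :: nat
  have dl: "0 < dl k" for k by (auto simp: dl_def)
  define g where "g k p = (\<chi> i. if i \<in> J then f (p + dl k *\<^sub>R 1) $ i else 0)" for k p
  have ex: "\<exists>p\<in>stdsimp J. \<exists>\<nu>>0. g k p = \<nu> *\<^sub>R p" for k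
  proof (rule stdsimp_fix[OF J])
    have "continuous_on (stdsimp J) (\<lambda>p. f (p + dl k *\<^sub>R 1))"
      by (rule continuous_on_compose2[OF fcont]) (auto intro!: continuous_intros pos_shift stdsimp_nonneg dl)
    then have c: "continuous_on (stdsimp J) (\<lambda>p. f (p + dl k *\<^sub>R 1) $ i)" for i
      by (rule continuous_on_component)
    show "continuous_on (stdsimp J) (g k)" unfolding g_def
    proof (rule continuous_on_vec_lambda)
      fix i show "continuous_on (stdsimp J) (\<lambda>p. if i \<in> J then f (p + dl k *\<^sub>R 1) $ i else 0)"
        using c[of i] by (cases "i \<in> J") (simp_all add: continuous_on_const)
    qed
    show "0 < g k p $ i" if "p \<in> stdsimp J" "i \<in> J" for p i
      using fpos'[OF pos_shift[OF stdsimp_nonneg[OF that(1)] dl]] that(2) by (simp add: g_def)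
  qed (simp add: g_def)
  have "\<forall>k. \<exists>p. p \<in> stdsimp J \<and> (\<forall>i. \<mu> * p $ i \<le> f (p + dl k *\<^sub>R 1) $ i)"
  proof
    fix k
    from ex[of k] obtain p \<nu> where p: "p \<in> stdsimp J" "0 < \<nu>" "g k p = \<nu> *\<^sub>R p" by blast
    have pn: "nonneg_vec p" using stdsimp_nonneg[OF p(1)] .
    have pz: "i \<notin> J \<Longrightarrow> p $ i = 0" for i using p(1) by (simp add: stdsimp_def)
    have fp: "i \<in> J \<Longrightarrow> f (p + dl k *\<^sub>R 1) $ i = \<nu> * p $ i" for i
      using arg_cong[OF p(3), of "\<lambda>v. v $ i"] by (simp add: g_def)
    have ppos: "i \<in> J \<Longrightarrow> 0 < p $ i" for i
      using fp[of i] fpos'[OF pos_shift[OF pn dl]] p(2) by (metis zero_less_mult_pos)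
    define y where "y = (\<chi> i. if i \<in> J then p $ i else 1)"
    have y: "pos_vec y" using ppos by (simp add: y_def pos_vec_def)
    have P0y: "P0 J y = p" using pz by (auto simp: P0_def y_def vec_eq_iff)
    have "cw_upper (f0J f J) \<le> ereal (Max (range (\<lambda>i. f0J f J y $ i / y $ i)))"
      unfolding cw_upper_def by (rule INF_lower) (use y in auto)
    then have "ereal \<mu> \<le> ereal (Max (range (\<lambda>i. f0J f J y $ i / y $ i)))" using hyp by (rule order_trans[rotated])
    then have m1: "\<mu> \<le> Max (range (\<lambda>i. f0J f J y $ i / y $ i))" by simp
    have "Max (range (\<lambda>i. f0J f J y $ i / y $ i)) \<in> range (\<lambda>i. f0J f J y $ i / y $ i)"
      by (rule Max_in) auto
    then obtain i where i: "Max (range (\<lambda>i. f0J f J y $ i / y $ i)) = f0J f J y $ i / y $ i"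
      by (auto simp del: Max_in)
    have mi: "\<mu> \<le> f0J f J y $ i / y $ i" using m1 i by simp
    have iJ: "i \<in> J"
    proof (rule ccontr)
      assume "i \<notin> J"
      then have "f0J f J y $ i = 0" using g_term[OF y] by simp
      then show False using mi \<mu> by simp
    qed
    have "f0J f J y $ i = lowext p $ i" using g_term[OF y, of J i] iJ P0y by simp
    also have "\<dots> \<le> f (p + dl k *\<^sub>R 1) $ i" by (rule lowext_lower[OF pn dl])
    also have "\<dots> = \<nu> * p $ i" by (rule fp[OF iJ])
    finally have F: "f0J f J y $ i \<le> \<nu> * p $ i" .
    have yi: "y $ i = p $ i" using iJ by (simp add: y_def)
    have "f0J f J y $ i / y $ i \<le> \<nu>" using F yi ppos[OF iJ] by (simp add: divide_le_eq)
    then have "\<mu> \<le> \<nu>" using mi by linarith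
    have "\<mu> * p $ j \<le> f (p + dl k *\<^sub>R 1) $ j" for j
    proof (cases "j \<in> J")
      case True
      then show ?thesis using fp[OF True] \<open>\<mu> \<le> \<nu>\<close> ppos[OF True] by (simp add: mult_right_mono)
    next
      case False
      then show ?thesis using pz[OF False] fpos'[OF pos_shift[OF pn dl]] by (simp add: less_imp_le)
    qed
    then show "\<exists>p. p \<in> stdsimp J \<and> (\<forall>i. \<mu> * p $ i \<le> f (p + dl k *\<^sub>R 1) $ i)" using p(1) by blast
  qed
  then have "\<exists>ps. \<forall>k. ps k \<in> stdsimp J \<and> (\<forall>i. \<mu> * ps k $ i \<le> f (ps k + dl k *\<^sub>R 1) $ i)"
    by (rule choice)
  then obtain ps where ps: "\<And>k. ps k \<in> stdsimp J" and psf: "\<And>k i. \<mu> * ps k $ i \<le> f (ps k + dl k *\<^sub>R 1) $ i"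
    by blast
  have z0: "0 \<le> (\<lambda>k. 0::real) k \<and> (\<lambda>k. 0::real) k \<le> 0" for k by simp
  obtain u \<mu>' r where ur: "u \<in> stdsimp J" "strict_mono (r::nat\<Rightarrow>nat)"
    "(ps \<circ> r) \<longlonglongrightarrow> u" "((\<lambda>k. 0::real) \<circ> r) \<longlonglongrightarrow> \<mu>'"
    by (rule stdsimp_subseq[OF ps z0])
  have un: "nonneg_vec u" by (rule stdsimp_nonneg[OF ur(1)])
  have dllim: "dl \<longlonglongrightarrow> 0" unfolding dl_def using LIMSEQ_inverse_real_of_nat_add[of 0]
    by (simp add: divide_inverse add.commute)
  have dlr: "(\<lambda>k. dl (r k)) \<longlonglongrightarrow> 0" using LIMSEQ_subseq_LIMSEQ[OF dllim ur(2)] by (simp add: comp_def)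
  have plim: "(\<lambda>k. ps (r k)) \<longlonglongrightarrow> u" using ur(3) by (simp add: comp_def)
  have A: "\<mu> * u $ i \<le> lowext u $ i" for i
  proof (rule lowext_greatest)
    fix e :: real assume e: "0 < e"
    have "\<forall>\<^sub>F k in sequentially. \<forall>j. ps (r k) $ j + dl (r k) < u $ j + e"
    proof (rule eventually_all_finite)
      fix j
      have "(\<lambda>k. ps (r k) $ j + dl (r k)) \<longlonglongrightarrow> u $ j + 0"
        by (intro tendsto_intros tendsto_vec_nth plim dlr)
      moreover have "u $ j + 0 < u $ j + e" using e by simp
      ultimately show "\<forall>\<^sub>F k in sequentially. ps (r k) $ j + dl (r k) < u $ j + e" by (rule order_tendstoD)
    qed
    then have ev: "\<forall>\<^sub>F k in sequentially. \<mu> * ps (r k) $ i \<le> f (u + e *\<^sub>R 1) $ i"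
    proof (rule eventually_mono)
      fix k assume k: "\<forall>j. ps (r k) $ j + dl (r k) < u $ j + e"
      have "f (ps (r k) + dl (r k) *\<^sub>R 1) $ i \<le> f (u + e *\<^sub>R 1) $ i"
        by (rule fmono[OF pos_shift[OF stdsimp_nonneg[OF ps] dl] pos_shift[OF un e]])
          (use k in \<open>auto intro: less_imp_le\<close>)
      then show "\<mu> * ps (r k) $ i \<le> f (u + e *\<^sub>R 1) $ i" using psf[of "r k" i] by linarith
    qed
    have "(\<lambda>k. \<mu> * ps (r k) $ i) \<longlonglongrightarrow> \<mu> * u $ i" by (intro tendsto_intros tendsto_vec_nth plim)
    then show "\<mu> * u $ i \<le> f (u + e *\<^sub>R 1) $ i" using ev by (simp add: tendsto_upperbound)
  qed
  have supp: "{i. 0 < u $ i} \<noteq> {}" by (rule stdsimp_supp[OF ur(1)])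
  then obtain k where k: "0 < u $ k" by auto
  have uz: "i \<notin> J \<Longrightarrow> u $ i = 0" for i using ur(1) by (simp add: stdsimp_def)
  have kJ: "k \<in> J" using uz k by force
  show ?thesis
  proof (intro exI conjI allI impI)
    show "nonneg_vec u" by (rule un)
    show "\<exists>k\<in>J. 0 < u $ k" using kJ k by blast
    show "i \<notin> J \<Longrightarrow> u $ i = 0" for i by (rule uz)
    fix v i assume v: "pos_vec v" and uv: "\<forall>i. u $ i \<le> v $ i"
    have "lowext u $ i \<le> f v $ i" by (rule lowext_le_pos[OF un v]) (use uv in auto)
    then show "\<mu> * u $ i \<le> f v $ i" using A[of i] by linarith
  qed
qed

end

context ophom begin

lemma L2:
  assumes J: "J \<noteq> {}" "J \<noteq> UNIV" and \<mu>: "0 < \<mu>" and hyp: "cw_lower (finfJ f (- J)) \<le> ereal \<mu>"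
  shows "\<exists>z. nonneg_vec z \<and> (\<exists>l. l \<notin> J \<and> 0 < z $ l) \<and> (\<forall>i\<in>J. z $ i = 0)
    \<and> (\<forall>v. pos_vec v \<longrightarrow> (\<forall>j. z $ j * v $ j \<le> 1) \<longrightarrow> (\<forall>i. z $ i * f v $ i \<le> \<mu>))"
proof -
  define dl where "dl k = 1 / (real k + 1)" for k :: nat
  have dl: "0 < dl k" for k by (auto simp: dl_def)
  define Pk where "Pk k z = (\<chi> j. 1 / (z $ j + dl k))" for k and z :: "real^'n"
  have Pkpos: "nonneg_vec z \<Longrightarrow> pos_vec (Pk k z)" for k z
    using dl[of k] by (auto simp: Pk_def pos_vec_def nonneg_vec_def add_nonneg_pos)
  define g where "g k z = (\<chi> i. if i \<notin> J then 1 / f (Pk k z) $ i else 0)" for k z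
  have ex: "\<exists>z\<in>stdsimp (- J). \<exists>\<nu>>0. g k z = \<nu> *\<^sub>R z" for k
  proof (rule stdsimp_fix)
    show "- J \<noteq> {}" using J(2) by auto
    have "continuous_on (stdsimp (- J)) (Pk k)" unfolding Pk_def
    proof (rule continuous_on_vec_lambda)
      fix j
      show "continuous_on (stdsimp (- J)) (\<lambda>z. 1 / (z $ j + dl k))"
      proof -
        have "z $ j + dl k \<noteq> 0" if "z \<in> stdsimp (- J)" for z
        proof -
          have "0 \<le> z $ j" using that by (simp add: stdsimp_def)
          then show "z $ j + dl k \<noteq> 0" using dl[of k] by linarith
        qed
        then show ?thesis by (intro continuous_intros continuous_on_component) auto
      qed
    qed
    then have "continuous_on (stdsimp (- J)) (\<lambda>z. f (Pk k z))"
      by (rule continuous_on_compose2[OF fcont]) (auto intro: Pkpos stdsimp_nonneg)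
    then have c: "continuous_on (stdsimp (- J)) (\<lambda>z. 1 / f (Pk k z) $ i)" for i
    proof -
      assume cf: "continuous_on (stdsimp (- J)) (\<lambda>z. f (Pk k z))"
      have "f (Pk k z) $ i \<noteq> 0" if "z \<in> stdsimp (- J)" for z
        using fpos'[OF Pkpos[OF stdsimp_nonneg[OF that]], of k i] by simp
      then show ?thesis using cf by (intro continuous_intros continuous_on_component) auto
    qed
    show "continuous_on (stdsimp (- J)) (g k)" unfolding g_def
    proof (rule continuous_on_vec_lambda)
      fix i show "continuous_on (stdsimp (- J)) (\<lambda>z. if i \<notin> J then 1 / f (Pk k z) $ i else 0)"
        using c[of i] by (cases "i \<in> J") (simp_all add: continuous_on_const)
    qed
    show "0 < g k z $ i" if "z \<in> stdsimp (- J)" "i \<in> - J" for z i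
      using fpos'[OF Pkpos[OF stdsimp_nonneg[OF that(1)]]] that(2) by (simp add: g_def)
  qed (simp add: g_def)
  have "\<forall>k. \<exists>z. z \<in> stdsimp (- J) \<and> (\<forall>i. z $ i * f (Pk k z) $ i \<le> \<mu>)"
  proof
    fix k
    from ex[of k] obtain z S where z: "z \<in> stdsimp (- J)" "0 < S" "g k z = S *\<^sub>R z" by blast
    have zn: "nonneg_vec z" using stdsimp_nonneg[OF z(1)] .
    have zz: "i \<in> J \<Longrightarrow> z $ i = 0" for i using z(1) by (simp add: stdsimp_def)
    define y where "y = Pk k z"
    have y: "pos_vec y" unfolding y_def by (rule Pkpos[OF zn])
    have fy: "0 < f y $ i" for i by (rule fpos'[OF y])
    have gi: "i \<notin> J \<Longrightarrow> 1 / f y $ i = S * z $ i" for i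
      using arg_cong[OF z(3), of "\<lambda>v. v $ i"] by (simp add: g_def y_def)
    have zf: "i \<notin> J \<Longrightarrow> z $ i * f y $ i = 1 / S" for i
    proof -
      assume i: "i \<notin> J"
      have "S * z $ i * f y $ i = 1" using gi[OF i] fy[of i] by (simp add: field_simps)
      then show ?thesis using z(2) by (simp add: field_simps)
    qed
    have zpos: "i \<notin> J \<Longrightarrow> 0 < z $ i" for i
      using gi[of i] fy[of i] z(2) by (metis divide_pos_pos zero_less_mult_pos zero_less_one)
    have "Min (range (\<lambda>i. finfJ f (- J) (ereal_vec y) i / ereal (y $ i))) \<le> cw_lower (finfJ f (- J))"
      unfolding cw_lower_def by (rule SUP_upper) (use y in auto)
    then have m1: "Min (range (\<lambda>i. finfJ f (- J) (ereal_vec y) i / ereal (y $ i))) \<le> ereal \<mu>"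
      using hyp by (rule order_trans)
    have "Min (range (\<lambda>i. finfJ f (- J) (ereal_vec y) i / ereal (y $ i))) \<in> range (\<lambda>i. finfJ f (- J) (ereal_vec y) i / ereal (y $ i))"
      by (rule Min_in) auto
    then obtain i where i: "Min (range (\<lambda>i. finfJ f (- J) (ereal_vec y) i / ereal (y $ i))) = finfJ f (- J) (ereal_vec y) i / ereal (y $ i)"
      by (auto simp del: Min_in)
    have yi: "0 < y $ i" using y by (simp add: pos_vec_def)
    have mi: "finfJ f (- J) (ereal_vec y) i / ereal (y $ i) \<le> ereal \<mu>" using m1 i by simp
    have iJ: "i \<notin> J"
    proof
      assume "i \<in> J"
      then have "finfJ f (- J) (ereal_vec y) i / ereal (y $ i) = \<infinity>"
        using finf_term[OF y J(1), of i] inf_div[OF yi] by simp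
      then show False using mi by simp
    qed
    have "ereal (f y $ i) \<le> upext (Pinf (- J) (ereal_vec y)) i"
      by (rule upext_upper[OF y]) (simp add: Pinf_def ereal_vec_def)
    then have "ereal (f y $ i) / ereal (y $ i) \<le> upext (Pinf (- J) (ereal_vec y)) i / ereal (y $ i)"
      using yi by (intro ereal_divide_right_mono) auto
    then have "ereal (f y $ i / y $ i) \<le> upext (Pinf (- J) (ereal_vec y)) i / ereal (y $ i)" using yi by simp
    moreover have "upext (Pinf (- J) (ereal_vec y)) i / ereal (y $ i) \<le> ereal \<mu>"
      using mi finf_term[OF y J(1), of i] iJ by simp
    ultimately have "ereal (f y $ i / y $ i) \<le> ereal \<mu>" by (rule order_trans)
    then have "f y $ i \<le> \<mu> * y $ i" using yi by (simp add: divide_le_eq)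
    then have "z $ i * f y $ i \<le> z $ i * (\<mu> * y $ i)" using zpos[OF iJ] by (simp add: mult_left_mono)
    also have "\<dots> = \<mu> * (z $ i / (z $ i + dl k))" by (simp add: y_def Pk_def)
    also have "\<dots> \<le> \<mu> * 1"
    proof (rule mult_left_mono)
      show "z $ i / (z $ i + dl k) \<le> 1" using zpos[OF iJ] dl[of k] by (simp add: divide_le_eq)
    qed (use \<mu> in simp)
    finally have S\<mu>: "1 / S \<le> \<mu>" using zf[OF iJ] by simp
    have "z $ j * f (Pk k z) $ j \<le> \<mu>" for j
    proof (cases "j \<in> J")
      case True then show ?thesis using zz[OF True] \<mu> by simp
    next
      case False then show ?thesis using zf[OF False] S\<mu> by (simp add: y_def)
    qed
    then show "\<exists>z. z \<in> stdsimp (- J) \<and> (\<forall>i. z $ i * f (Pk k z) $ i \<le> \<mu>)" using z(1) by blast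
  qed
  then have "\<exists>zs. \<forall>k. zs k \<in> stdsimp (- J) \<and> (\<forall>i. zs k $ i * f (Pk k (zs k)) $ i \<le> \<mu>)"
    by (rule choice)
  then obtain zs where zs: "\<And>k. zs k \<in> stdsimp (- J)" and zsf: "\<And>k i. zs k $ i * f (Pk k (zs k)) $ i \<le> \<mu>"
    by blast
  have z0: "0 \<le> (\<lambda>k. 0::real) k \<and> (\<lambda>k. 0::real) k \<le> 0" for k by simp
  obtain z \<mu>' r where zr: "z \<in> stdsimp (- J)" "strict_mono (r::nat\<Rightarrow>nat)"
    "(zs \<circ> r) \<longlonglongrightarrow> z" "((\<lambda>k. 0::real) \<circ> r) \<longlonglongrightarrow> \<mu>'"
    by (rule stdsimp_subseq[OF zs z0])
  have zn: "nonneg_vec z" by (rule stdsimp_nonneg[OF zr(1)])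
  have dllim: "dl \<longlonglongrightarrow> 0" unfolding dl_def using LIMSEQ_inverse_real_of_nat_add[of 0]
    by (simp add: divide_inverse add.commute)
  have dlr: "(\<lambda>k. dl (r k)) \<longlonglongrightarrow> 0" using LIMSEQ_subseq_LIMSEQ[OF dllim zr(2)] by (simp add: comp_def)
  have zlim: "(\<lambda>k. zs (r k)) \<longlonglongrightarrow> z" using zr(3) by (simp add: comp_def)
  have zsn: "0 \<le> zs k $ i" for k i using zs[of k] by (simp add: stdsimp_def)
  have final: "z $ i * f v $ i \<le> \<mu>" if v: "pos_vec v" and zv: "\<forall>j. z $ j * v $ j \<le> 1" for v i
  proof (rule field_le_epsilon)
    fix e :: real assume e: "0 < e"
    define \<theta> where "\<theta> = e / \<mu>"
    have \<theta>: "0 < \<theta>" using e \<mu> by (simp add: \<theta>_def)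
    have vj: "0 < v $ j" for j using v by (simp add: pos_vec_def)
    have "\<forall>\<^sub>F k in sequentially. \<forall>j. v $ j * (zs (r k) $ j + dl (r k)) < 1 + \<theta>"
    proof (rule eventually_all_finite)
      fix j
      have "(\<lambda>k. v $ j * (zs (r k) $ j + dl (r k))) \<longlonglongrightarrow> v $ j * (z $ j + 0)"
        by (intro tendsto_intros tendsto_vec_nth zlim dlr)
      moreover have "v $ j * (z $ j + 0) < 1 + \<theta>" using zv[rule_format, of j] \<theta> by (simp add: mult.commute)
      ultimately show "\<forall>\<^sub>F k in sequentially. v $ j * (zs (r k) $ j + dl (r k)) < 1 + \<theta>"
        by (rule order_tendstoD)
    qed
    then have ev: "\<forall>\<^sub>F k in sequentially. zs (r k) $ i * f v $ i \<le> (1 + \<theta>) * \<mu>"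
    proof (rule eventually_mono)
      fix k assume k: "\<forall>j. v $ j * (zs (r k) $ j + dl (r k)) < 1 + \<theta>"
      have le: "v $ j \<le> (1 + \<theta>) * Pk (r k) (zs (r k)) $ j" for j
      proof -
        have den: "0 < zs (r k) $ j + dl (r k)" using zsn[of "r k" j] dl[of "r k"] by linarith
        have "v $ j * (zs (r k) $ j + dl (r k)) \<le> 1 + \<theta>" using k less_imp_le by blast
        then show ?thesis using den by (simp add: Pk_def field_simps)
      qed
      have "f v $ i \<le> (1 + \<theta>) * f (Pk (r k) (zs (r k))) $ i"
        by (rule fup[OF Pkpos[OF stdsimp_nonneg[OF zs]] v _ le]) (use \<theta> in simp)
      then have "zs (r k) $ i * f v $ i \<le> zs (r k) $ i * ((1 + \<theta>) * f (Pk (r k) (zs (r k))) $ i)"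
        using zsn by (simp add: mult_left_mono)
      also have "\<dots> = (1 + \<theta>) * (zs (r k) $ i * f (Pk (r k) (zs (r k))) $ i)" by simp
      also have "\<dots> \<le> (1 + \<theta>) * \<mu>" using zsf[of "r k" i] \<theta> by (simp add: mult_left_mono)
      finally show "zs (r k) $ i * f v $ i \<le> (1 + \<theta>) * \<mu>" .
    qed
    have "(\<lambda>k. zs (r k) $ i * f v $ i) \<longlonglongrightarrow> z $ i * f v $ i" by (intro tendsto_intros tendsto_vec_nth zlim)
    then have "z $ i * f v $ i \<le> (1 + \<theta>) * \<mu>" using ev by (simp add: tendsto_upperbound)
    also have "\<dots> = \<mu> + e" using \<mu> by (simp add: \<theta>_def field_simps)
    finally show "z $ i * f v $ i \<le> \<mu> + e" .
  qed
  have supp: "{i. 0 < z $ i} \<noteq> {}" by (rule stdsimp_supp[OF zr(1)])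
  then obtain l where l: "0 < z $ l" by auto
  have zz: "i \<in> J \<Longrightarrow> z $ i = 0" for i using zr(1) by (simp add: stdsimp_def)
  have lJ: "l \<notin> J" using zz l by force
  show ?thesis
    using zn lJ l zz final by blast
qed

end

context ophom begin

lemma unbounded:
  assumes x: "pos_vec x" and fx: "f x = \<mu> *\<^sub>R x"
    and un: "nonneg_vec u" and uk: "0 < u $ k"
    and uprop: "\<And>v. pos_vec v \<Longrightarrow> (\<forall>i. u $ i \<le> v $ i) \<Longrightarrow> (\<forall>i. \<mu> * u $ i \<le> f v $ i)"
    and zn: "nonneg_vec z" and zl: "0 < z $ l"
    and zprop: "\<And>v. pos_vec v \<Longrightarrow> (\<forall>j. z $ j * v $ j \<le> 1) \<Longrightarrow> (\<forall>i. z $ i * f v $ i \<le> \<mu>)"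
    and disj: "\<And>i. u $ i * z $ i = 0"
  shows "\<not> hilbert_bounded (eigvecs f)"
proof
  assume "hilbert_bounded (eigvecs f)"
  then obtain x0 C where x0: "pos_vec x0" and C: "\<And>y. y \<in> eigvecs f \<Longrightarrow> hilbert_metric x0 y \<le> C"
    unfolding hilbert_bounded_def by blast
  have \<mu>: "0 < \<mu>" by (rule eig_pos[OF x fx])
  have xi: "0 < x $ i" for i using x by (simp add: pos_vec_def)
  have x0i: "0 < x0 $ i" for i using x0 by (simp add: pos_vec_def)
  have ui: "0 \<le> u $ i" for i using un by (simp add: nonneg_vec_def)
  have zi: "0 \<le> z $ i" for i using zn by (simp add: nonneg_vec_def)
  define t where "t = exp C * x0 $ k / (u $ k * z $ l * x0 $ l) + 1"
  have t: "0 < t" unfolding t_def using uk zl x0i by (simp add: add_pos_nonneg)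
  have tbig: "exp C < t * u $ k * z $ l * x0 $ l / x0 $ k"
  proof -
    have "exp C * x0 $ k / (u $ k * z $ l * x0 $ l) < t" unfolding t_def by simp
    then have "exp C * x0 $ k < t * (u $ k * z $ l * x0 $ l)"
      using uk zl x0i[of l] by (simp add: divide_less_eq)
    then show ?thesis using x0i[of k] by (simp add: less_divide_eq mult.assoc)
  qed
  define L where "L = max 1 (max (Max (range (\<lambda>i. t * u $ i / x $ i))) (Max (range (\<lambda>i. x $ i * z $ i))))"
  have L1: "1 \<le> L" unfolding L_def by simp
  have L2: "t * u $ i / x $ i \<le> L" for i
  proof -
    have "t * u $ i / x $ i \<le> Max (range (\<lambda>i. t * u $ i / x $ i))" by (rule Max_ge) auto
    then show ?thesis unfolding L_def by linarith
  qed
  have L3: "x $ i * z $ i \<le> L" for i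
  proof -
    have "x $ i * z $ i \<le> Max (range (\<lambda>i. x $ i * z $ i))" by (rule Max_ge) auto
    then show ?thesis unfolding L_def by linarith
  qed
  define a where "a = (\<chi> i. max (t * u $ i) (x $ i / L))"
  define b where "b = (\<chi> i. if 0 < z $ i then min (1 / z $ i) (L * x $ i) else L * x $ i)"
  have apos: "pos_vec a" using xi L1 unfolding a_def pos_vec_def by (simp add: less_max_iff_disj)
  have bpos: "pos_vec b" using xi L1 zi unfolding b_def pos_vec_def by auto
  have ab: "a $ i \<le> b $ i" for i
  proof -
    have xL: "x $ i / L \<le> L * x $ i"
    proof -
      have LL: "1 \<le> L * L" using mult_mono[OF L1 L1] L1 by simp
      have "1 * x $ i \<le> (L * L) * x $ i" using mult_right_mono[OF LL, of "x $ i"] xi[of i] by simp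
      then have "x $ i \<le> L * x $ i * L" by (simp add: mult_ac)
      then show ?thesis using L1 by (simp add: divide_le_eq)
    qed
    have tu: "t * u $ i \<le> L * x $ i" using L2[of i] xi[of i] by (simp add: divide_le_eq mult.commute)
    show ?thesis
    proof (cases "0 < z $ i")
      case True
      then have u0: "u $ i = 0" using disj[of i] by simp
      have "x $ i / L \<le> 1 / z $ i" using L3[of i] True L1 by (simp add: field_simps)
      then show ?thesis using True u0 xL xi[of i] L1 by (simp add: a_def b_def)
    next
      case False
      then show ?thesis using xL tu by (simp add: a_def b_def)
    qed
  qed
  define h where "h y = (1 / \<mu>) *\<^sub>R f y" for y
  have cb: "cbox a b \<subseteq> {y. pos_vec y}"
  proof
    fix y assume "y \<in> cbox a b"
    then have "a $ i \<le> y $ i" for i by (simp add: mem_box_cart)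
    then show "y \<in> {y. pos_vec y}" using apos by (auto simp: pos_vec_def intro: less_le_trans)
  qed
  have fa: "\<mu> * a $ i \<le> f a $ i" for i
  proof -
    have "\<mu> * u $ i \<le> f ((1 / t) *\<^sub>R a) $ i"
      using uprop[OF pos_scale[OF apos]] t by (simp add: a_def field_simps) 
    then have "\<mu> * (t * u $ i) \<le> f a $ i" using fhom'[OF apos, of "1/t" i] t by (simp add: field_simps)
    moreover have "\<mu> * (x $ i / L) \<le> f a $ i"
    proof -
      have "f ((1 / L) *\<^sub>R x) $ i \<le> f a $ i"
        by (rule fmono[OF pos_scale[OF x] apos]) (use L1 in \<open>auto simp: a_def\<close>)
      then show ?thesis using fhom'[OF x, of "1/L" i] fx L1 by simp
    qed
    ultimately show ?thesis by (simp add: a_def max_def)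
  qed
  have fb: "f b $ i \<le> \<mu> * b $ i" for i
  proof -
    have "f b $ i \<le> f (L *\<^sub>R x) $ i" by (rule fmono[OF bpos pos_scale[OF x]]) (use L1 in \<open>auto simp: b_def\<close>)
    then have f1: "f b $ i \<le> \<mu> * (L * x $ i)" using fhom'[OF x, of L i] fx L1 by (simp add: mult.left_commute)
    show ?thesis
    proof (cases "0 < z $ i")
      case True
      have "\<forall>j. z $ j * b $ j \<le> 1"
      proof
        fix j show "z $ j * b $ j \<le> 1"
        proof (cases "0 < z $ j")
          case True
          then have "b $ j \<le> 1 / z $ j" by (simp add: b_def)
          then show ?thesis using True by (simp add: field_simps)
        next
          case False then have "z $ j = 0" using zi[of j] by simp
          then show ?thesis by simp
        qed
      qed
      then have "z $ i * f b $ i \<le> \<mu>" using zprop[OF bpos] by blast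
      then have "f b $ i \<le> \<mu> * (1 / z $ i)" using True by (simp add: field_simps)
      then show ?thesis using f1 True by (simp add: b_def min_def)
    next
      case False then show ?thesis using f1 by (simp add: b_def)
    qed
  qed
  have hc: "continuous_on (cbox a b) h" unfolding h_def
    by (intro continuous_intros continuous_on_subset[OF fcont cb])
  have hm: "h \<in> cbox a b \<rightarrow> cbox a b"
  proof
    fix y assume y: "y \<in> cbox a b"
    have yp: "pos_vec y" using cb y by auto
    have ay: "a $ i \<le> y $ i" and yb: "y $ i \<le> b $ i" for i using y by (simp_all add: mem_box_cart)
    have "a $ i \<le> h y $ i \<and> h y $ i \<le> b $ i" for i
    proof
      have "f a $ i \<le> f y $ i" by (rule fmono[OF apos yp]) (use ay in auto)
      then show "a $ i \<le> h y $ i" using fa[of i] \<mu> by (simp add: h_def field_simps)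
      have "f y $ i \<le> f b $ i" by (rule fmono[OF yp bpos]) (use yb in auto)
      then show "h y $ i \<le> b $ i" using fb[of i] \<mu> by (simp add: h_def field_simps)
    qed
    then show "h y \<in> cbox a b" by (simp add: mem_box_cart)
  qed
  have "a \<in> cbox a b" using ab by (simp add: mem_box_cart)
  then have ne: "cbox a b \<noteq> {}" by auto
  obtain y where y: "y \<in> cbox a b" "h y = y"
    by (rule brouwer[OF compact_cbox convex_box(1) ne hc hm])
  have yp: "pos_vec y" using cb y by auto
  have "f y = \<mu> *\<^sub>R h y" unfolding h_def using \<mu> by simp
  then have fy: "f y = \<mu> *\<^sub>R y" using y(2) by simp
  have ye: "y \<in> eigvecs f" using yp fy by (auto simp: eigvecs_def)
  have yk: "t * u $ k \<le> y $ k"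
  proof -
    have "a $ k \<le> y $ k" using y(1) by (simp add: mem_box_cart)
    then show ?thesis by (simp add: a_def)
  qed
  have yl: "y $ l \<le> 1 / z $ l"
  proof -
    have "y $ l \<le> b $ l" using y(1) by (simp add: mem_box_cart)
    then show ?thesis using zl by (simp add: b_def)
  qed
  have ypi: "0 < y $ i" for i using yp by (simp add: pos_vec_def)
  have "t * u $ k * z $ l * x0 $ l / x0 $ k \<le> (y $ k * x0 $ l) / (x0 $ k * y $ l)"
  proof -
    have "t * u $ k * z $ l \<le> y $ k * z $ l" using yk zl by (simp add: mult_right_mono)
    also have "\<dots> \<le> y $ k / y $ l"
    proof -
      have "y $ l * z $ l \<le> 1" using yl zl by (simp add: field_simps)
      then have "y $ k * (y $ l * z $ l) \<le> y $ k" using ypi[of k] by (simp add: mult_left_le)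
      then show ?thesis using ypi[of l] by (simp add: field_simps)
    qed
    finally have A: "t * u $ k * z $ l \<le> y $ k / y $ l" .
    have "t * u $ k * z $ l * x0 $ l / x0 $ k \<le> (y $ k / y $ l) * x0 $ l / x0 $ k"
      by (rule divide_right_mono[OF mult_right_mono[OF A less_imp_le[OF x0i[of l]]] less_imp_le[OF x0i[of k]]])
    also have "\<dots> = (y $ k * x0 $ l) / (x0 $ k * y $ l)"
      using x0i[of k] ypi[of l] by (simp add: field_simps)
    finally show ?thesis .
  qed
  then have "exp C < (y $ k * x0 $ l) / (x0 $ k * y $ l)" using tbig by linarith
  moreover have E0: "0 < (y $ k * x0 $ l) / (x0 $ k * y $ l)" using ypi x0i by simp
  ultimately have "exp C < exp (ln ((y $ k * x0 $ l) / (x0 $ k * y $ l)))" by simp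
  then have "C < ln ((y $ k * x0 $ l) / (x0 $ k * y $ l))" by simp
  also have "\<dots> \<le> hilbert_metric x0 y" by (rule hm_ge[OF x0 yp])
  also have "\<dots> \<le> C" by (rule C[OF ye])
  finally show False by simp
qed

end


theorem theorem3p1:
  fixes f :: "real^'n \<Rightarrow> real^'n"
  assumes "\<And>x. pos_vec x \<Longrightarrow> pos_vec (f x)"
    and "order_preserving_pos f"
    and "homogeneous_pos f"
  shows "(eigvecs f \<noteq> {} \<and> hilbert_bounded (eigvecs f)) \<longleftrightarrow>
         (\<forall>J. J \<noteq> {} \<and> J \<noteq> UNIV \<longrightarrow> cw_upper (f0J f J) < cw_lower (finfJ f (- J)))"
proof -
  interpret ophom f using assms by unfold_locales
  show ?thesis
  proof
    assume E: "eigvecs f \<noteq> {} \<and> hilbert_bounded (eigvecs f)"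
    show "\<forall>J. J \<noteq> {} \<and> J \<noteq> UNIV \<longrightarrow> cw_upper (f0J f J) < cw_lower (finfJ f (- J))"
    proof (intro allI impI)
      fix J :: "'n set" assume J: "J \<noteq> {} \<and> J \<noteq> UNIV"
      obtain x where "x \<in> eigvecs f" using E by auto
      then obtain \<mu> where x: "pos_vec x" and fx: "f x = \<mu> *\<^sub>R x" by (auto simp: eigvecs_def)
      have \<mu>: "0 < \<mu>" by (rule eig_pos[OF x fx])
      show "cw_upper (f0J f J) < cw_lower (finfJ f (- J))"
      proof (rule ccontr)
        assume "\<not> cw_upper (f0J f J) < cw_lower (finfJ f (- J))"
        then have le: "cw_lower (finfJ f (- J)) \<le> cw_upper (f0J f J)" by simp
        have r1: "cw_upper (f0J f J) \<le> ereal \<mu>" by (rule R1[OF x fx])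
        have r2: "ereal \<mu> \<le> cw_lower (finfJ f (- J))" using R2[OF x fx] J by blast
        have h1: "ereal \<mu> \<le> cw_upper (f0J f J)" using r2 le by (rule order_trans)
        have h2: "cw_lower (finfJ f (- J)) \<le> ereal \<mu>" using le r1 by (rule order_trans)
        obtain u where un: "nonneg_vec u" and uk: "\<exists>k\<in>J. 0 < u $ k" and uz: "\<forall>i. i \<notin> J \<longrightarrow> u $ i = 0"
          and uprop: "\<forall>v. pos_vec v \<longrightarrow> (\<forall>i. u $ i \<le> v $ i) \<longrightarrow> (\<forall>i. \<mu> * u $ i \<le> f v $ i)"
          using L1[of J \<mu>] J \<mu> h1 by blast
        obtain z where zn: "nonneg_vec z" and zl: "\<exists>l. l \<notin> J \<and> 0 < z $ l" and zz: "\<forall>i\<in>J. z $ i = 0"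
          and zprop: "\<forall>v. pos_vec v \<longrightarrow> (\<forall>j. z $ j * v $ j \<le> 1) \<longrightarrow> (\<forall>i. z $ i * f v $ i \<le> \<mu>)"
          using L2[of J \<mu>] J \<mu> h2 by blast
        obtain k where k: "0 < u $ k" using uk by auto
        obtain l where l: "0 < z $ l" using zl by auto
        have disj: "u $ i * z $ i = 0" for i using uz zz by (cases "i \<in> J") auto
        have "\<not> hilbert_bounded (eigvecs f)"
          by (rule unbounded[OF x fx un k _ zn l _ disj]) (use uprop zprop in blast)+
        then show False using E by blast
      qed
    qed
  next
    assume H: "\<forall>J. J \<noteq> {} \<and> J \<noteq> UNIV \<longrightarrow> cw_upper (f0J f J) < cw_lower (finfJ f (- J))"
    show "eigvecs f \<noteq> {} \<and> hilbert_bounded (eigvecs f)"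
      using existence[OF H] bounded[OF H] by blast
  qed
qed


end
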